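(* Consider the $2\times2\times M$ Ising model with nearest- and next-nearest-neighbour interactions described in the context (antiferromagnetic layered Ising model when $J_1,J_2<0$), with real $J_1,J_2$ and temperature $T>0$. Let $\lambda_{\max}$ be the largest real root of the characteristic equation of the $4\times4$ matrix $\tau$ and $\mu_{\max}$ the largest real root of the characteristic equation of the $3\times3$ matrix $\tau'$ (defined in the context). Then the free energy per site $f(T)=-k_BT\lim_{M\to\infty}\frac{1}{4M}\ln Z_M$ equals $-\frac{k_BT}{4}\ln\lambda_{\max}$, the internal energy per site $u=-T^2\partial_T[f/T]$ equals $k_BT^2\partial_T[\frac14\ln\lambda_{\max}]$, the heat capacity per site $C=\partial_Tu$ equals $2k_BT\partial_T[\frac14\ln\lambda_{\max}]+k_BT^2\partial_T^2[\frac14\ln\lambda_{\max}]$, and the non-percolation probability satisfies $\lim_{M\to\infty}\frac{\ln(Z'_M/Z_M)}{M}=\ln\frac{\mu_{\max}}{\lambda_{\max}}$.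
   Context: Sites $t_i^m$, $i\in\{0,1,2,3\}$ (indices mod 4), $m\in\{0,\dots,M-1\}$, cyclically closed in $m$, spins $\sigma_i^m\in\{-1,1\}$. The cube energy is $$\mathcal H^m=-\sum_{r=0}^3\Big(J_1\big[\tfrac12\sigma_r^m\sigma_{r+1}^m+\tfrac12\sigma_r^{m+1}\sigma_{r+1}^{m+1}+\sigma_r^m\sigma_r^{m+1}\big]+J_2\big[\tfrac14\sigma_r^m\sigma_{r+2}^m+\tfrac14\sigma_r^{m+1}\sigma_{r+2}^{m+1}+\sigma_r^m\sigma_{r+1}^{m+1}+\sigma_r^m\sigma_{r-1}^{m+1}\big]\Big),$$ $\mathcal H=\sum_m\mathcal H^m$, $Z_M=\sum_\sigma e^{-\mathcal H/(k_BT)}$ over all $\sigma\in\{-1,1\}^{4M}$; $Z'_M$ is the same sum restricted to configurations with no $m,r$ such that $\sigma_r^m=\sigma_{r+1}^m=-1$. Transfer matrices: index a layer state $(s_0,\dots,s_3)$ by $k=1+\sum_i2^i(1-s_i)/2$; $\theta_{k,l}=\exp(-\mathcal H^m/(k_BT))$ with layer $m$ in state $k$, layer $m+1$ in state $l$. $\tau_{i,j}=\sum_{l\in G_j}\theta_{r_i,l}$, $(r_i)=(1,2,4,6)$, $G_1=\{1,16\}$, $G_2=\{2,3,5,8,9,12,14,15\}$, $G_3=\{4,7,10,13\}$, $G_4=\{6,11\}$; $\tau'_{i,j}=\sum_{l\in G'_j}\theta_{r'_i,l}$, $(r'_i)=(1,2,6)$, $G'_1=\{1\}$, $G'_2=\{2,3,5,9\}$,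 $G'_3=\{6,11\}$. *)

theory Defs
  imports "HOL-Analysis.Analysis" "Jordan_Normal_Form.Char_Poly"
begin

text \<open>A layer state is a function r \<mapsto> spin (indices taken mod 4).
  Energy of the cube between layer a (layer m) and layer b (layer m+1).\<close>

definition Hpair :: "real \<Rightarrow> real \<Rightarrow> (nat \<Rightarrow> real) \<Rightarrow> (nat \<Rightarrow> real) \<Rightarrow> real" where
  "Hpair J1 J2 a b = - (\<Sum>r<4.
      J1 * ( (1/2) * a (r mod 4) * a ((r+1) mod 4)
           + (1/2) * b (r mod 4) * b ((r+1) mod 4)
           + a (r mod 4) * b (r mod 4))
    + J2 * ( (1/4) * a (r mod 4) * a ((r+2) mod 4)
           + (1/4) * b (r mod 4) * b ((r+2) mod 4)
           + a (r mod 4) * b ((r+1) mod 4)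
           + a (r mod 4) * b ((r+3) mod 4)))"

definition configs :: "nat \<Rightarrow> (nat \<Rightarrow> nat \<Rightarrow> real) set" where
  "configs M = {..<M} \<rightarrow>\<^sub>E ({..<4} \<rightarrow>\<^sub>E {-1, 1})"

definition layer :: "nat \<Rightarrow> (nat \<Rightarrow> nat \<Rightarrow> real) \<Rightarrow> nat \<Rightarrow> nat \<Rightarrow> real" where
  "layer M \<sigma> m = (\<lambda>r. \<sigma> (m mod M) (r mod 4))"

definition Htot :: "real \<Rightarrow> real \<Rightarrow> nat \<Rightarrow> (nat \<Rightarrow> nat \<Rightarrow> real) \<Rightarrow> real" where
  "Htot J1 J2 M \<sigma> = (\<Sum>m<M. Hpair J1 J2 (layer M \<sigma> m) (layer M \<sigma> (m+1)))"

definition Zpart :: "real \<Rightarrow> real \<Rightarrow> real \<Rightarrow> nat \<Rightarrow> real \<Rightarrow> real" where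
  "Zpart kB J1 J2 M T = (\<Sum>\<sigma>\<in>configs M. exp (- Htot J1 J2 M \<sigma> / (kB * T)))"

definition nonperc :: "nat \<Rightarrow> (nat \<Rightarrow> nat \<Rightarrow> real) \<Rightarrow> bool" where
  "nonperc M \<sigma> = (\<forall>m<M. \<forall>r<4. \<not> (layer M \<sigma> m r = -1 \<and> layer M \<sigma> m (r+1) = -1))"

definition Zpart' :: "real \<Rightarrow> real \<Rightarrow> real \<Rightarrow> nat \<Rightarrow> real \<Rightarrow> real" where
  "Zpart' kB J1 J2 M T = (\<Sum>\<sigma>\<in>{\<sigma>\<in>configs M. nonperc M \<sigma>}. exp (- Htot J1 J2 M \<sigma> / (kB * T)))"

text \<open>Layer state with index k (1..16): k = 1 + sum_i 2^i (1 - s_i)/2.\<close>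
definition state :: "nat \<Rightarrow> nat \<Rightarrow> real" where
  "state k = (\<lambda>i. 1 - 2 * real (((k - 1) div 2 ^ (i mod 4)) mod 2))"

definition theta :: "real \<Rightarrow> real \<Rightarrow> real \<Rightarrow> real \<Rightarrow> nat \<Rightarrow> nat \<Rightarrow> real" where
  "theta kB J1 J2 T k l = exp (- Hpair J1 J2 (state k) (state l) / (kB * T))"

definition rows_tau :: "nat list" where "rows_tau = [1, 2, 4, 6]"
definition groups_tau :: "nat set list" where
  "groups_tau = [{1,16}, {2,3,5,8,9,12,14,15}, {4,7,10,13}, {6,11}]"
definition rows_tau' :: "nat list" where "rows_tau' = [1, 2, 6]"
definition groups_tau' :: "nat set list" where
  "groups_tau' = [{1}, {2,3,5,9}, {6,11}]"

text \<open>tau and tau' as matrices (0-based indices i,j correspond to 1-based i+1,j+1).\<close>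
definition tau :: "real \<Rightarrow> real \<Rightarrow> real \<Rightarrow> real \<Rightarrow> real mat" where
  "tau kB J1 J2 T = mat 4 4 (\<lambda>(i,j). \<Sum>l\<in>groups_tau ! j. theta kB J1 J2 T (rows_tau ! i) l)"

definition tau' :: "real \<Rightarrow> real \<Rightarrow> real \<Rightarrow> real \<Rightarrow> real mat" where
  "tau' kB J1 J2 T = mat 3 3 (\<lambda>(i,j). \<Sum>l\<in>groups_tau' ! j. theta kB J1 J2 T (rows_tau' ! i) l)"

definition max_real_root :: "real mat \<Rightarrow> real" where
  "max_real_root A = Max {x. poly (char_poly A) x = 0}"

definition lam_max :: "real \<Rightarrow> real \<Rightarrow> real \<Rightarrow> real \<Rightarrow> real" where
  "lam_max kB J1 J2 T = max_real_root (tau kB J1 J2 T)"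

definition mu_max :: "real \<Rightarrow> real \<Rightarrow> real \<Rightarrow> real \<Rightarrow> real" where
  "mu_max kB J1 J2 T = max_real_root (tau' kB J1 J2 T)"

definition free_energy :: "real \<Rightarrow> real \<Rightarrow> real \<Rightarrow> real \<Rightarrow> real" where
  "free_energy kB J1 J2 T = - kB * T * lim (\<lambda>M. ln (Zpart kB J1 J2 M T) / (4 * real M))"

definition internal_energy :: "real \<Rightarrow> real \<Rightarrow> real \<Rightarrow> real \<Rightarrow> real" where
  "internal_energy kB J1 J2 T = - T\<^sup>2 * deriv (\<lambda>t. free_energy kB J1 J2 t / t) T"

definition heat_capacity :: "real \<Rightarrow> real \<Rightarrow> real \<Rightarrow> real \<Rightarrow> real" where
  "heat_capacity kB J1 J2 T = deriv (internal_energy kB J1 J2) T"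

end

theory Submission
  imports Defs
begin


lemma perron_brouwer:
  fixes A :: "'n::finite \<Rightarrow> 'n \<Rightarrow> real"
  assumes pos: "\<And>i j. A i j > 0"
  shows "\<exists>r>0. \<exists>w. (\<forall>i. w i > 0) \<and> (\<forall>i. (\<Sum>j\<in>UNIV. A i j * w j) = r * w i)"
proof -
  define S where "S = {x::real^'n. (\<forall>i. 0 \<le> x$i \<and> x$i \<le> 1) \<and> (\<Sum>i\<in>UNIV. x$i) = 1}"
  define N where "N = (\<lambda>(x::real^'n) i. \<Sum>j\<in>UNIV. A i j * x$j)"
  define D where "D = (\<lambda>x. \<Sum>i\<in>UNIV. N x i)"
  define f where "f = (\<lambda>x. \<chi> i. N x i / D x)"
  have Npos: "N x i > 0" if "x \<in> S" for x i
  proof -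
    from that have nn: "\<forall>j. 0 \<le> x$j" and s1: "(\<Sum>i\<in>UNIV. x$i) = 1" by (auto simp: S_def)
    then obtain j where "x$j \<noteq> 0" by (metis (no_types, lifting) sum.neutral zero_neq_one)
    with nn have xj: "x$j > 0" by (simp add: order_less_le)
    have "0 < A i j * x$j" using pos xj by simp
    also have "\<dots> \<le> N x i" unfolding N_def
      by (rule member_le_sum) (use nn in \<open>auto intro!: mult_nonneg_nonneg less_imp_le[OF pos]\<close>)
    finally show ?thesis .
  qed
  have Dpos: "D x > 0" if "x \<in> S" for x
    unfolding D_def using Npos[OF that] by (simp add: sum_pos)
  have "compact S"
  proof -
    have "closed S" unfolding S_def
      by (intro closed_Collect_conj closed_Collect_all closed_Collect_le closed_Collect_eq continuous_intros)
    moreover have "bounded S"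
    proof (rule bounded_subset[OF bounded_cbox[of 0 "\<chi> i. 1"]])
      show "S \<subseteq> cbox 0 (\<chi> i. 1)" by (auto simp: S_def mem_box_cart)
    qed
    ultimately show ?thesis by (simp add: compact_eq_bounded_closed)
  qed
  moreover have "convex S"
    unfolding convex_def S_def
  proof (intro ballI allI impI, clarify)
    fix x y :: "real^'n" and u v :: real
    assume x: "\<forall>i. 0 \<le> x $ i \<and> x $ i \<le> 1" "(\<Sum>i\<in>UNIV. x $ i) = 1"
      and y: "\<forall>i. 0 \<le> y $ i \<and> y $ i \<le> 1" "(\<Sum>i\<in>UNIV. y $ i) = 1"
      and uv: "0 \<le> u" "0 \<le> v" "u + v = 1"
    have "(\<Sum>i\<in>UNIV. (u *\<^sub>R x + v *\<^sub>R y) $ i) = u * (\<Sum>i\<in>UNIV. x $ i) + v * (\<Sum>i\<in>UNIV. y $ i)"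
      by (simp add: sum.distrib sum_distrib_left)
    also have "\<dots> = 1" using x y uv by simp
    finally have "(\<Sum>i\<in>UNIV. (u *\<^sub>R x + v *\<^sub>R y) $ i) = 1" .
    moreover have "0 \<le> (u *\<^sub>R x + v *\<^sub>R y) $ i \<and> (u *\<^sub>R x + v *\<^sub>R y) $ i \<le> 1" for i
    proof -
      have "u * x$i \<le> u * 1" "v * y$i \<le> v * 1" using x y uv by (simp_all add: mult_left_le)
      then show ?thesis using x y uv by simp
    qed
    ultimately show "(\<forall>i. 0 \<le> (u *\<^sub>R x + v *\<^sub>R y) $ i \<and> (u *\<^sub>R x + v *\<^sub>R y) $ i \<le> 1) \<and>
         (\<Sum>i\<in>UNIV. (u *\<^sub>R x + v *\<^sub>R y) $ i) = 1" by blast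
  qed
  moreover have "S \<noteq> {}"
  proof -
    have "(\<chi> i. 1 / real CARD('n)) \<in> S" unfolding S_def
      by (auto simp: field_simps)
    then show ?thesis by blast
  qed
  moreover have "continuous_on S f"
    unfolding f_def N_def D_def
    by (intro continuous_intros) (use Dpos in \<open>fastforce simp: D_def N_def\<close>)
  moreover have "f \<in> S \<rightarrow> S"
  proof
    fix x assume x: "x \<in> S"
    have ge: "0 \<le> f x $ i" for i using Npos[OF x, of i] Dpos[OF x] by (simp add: f_def)
    have s: "(\<Sum>i\<in>UNIV. f x $ i) = 1" using Dpos[OF x]
      by (simp add: f_def sum_divide_distrib[symmetric] D_def)
    have le: "f x $ i \<le> 1" for i
    proof -
      have "f x $ i \<le> (\<Sum>i\<in>UNIV. f x $ i)" by (rule member_le_sum) (use ge in auto)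
      then show ?thesis using s by simp
    qed
    show "f x \<in> S" unfolding S_def using ge le s by auto
  qed
  ultimately obtain x where x: "x \<in> S" "f x = x" by (rule brouwer)
  have "\<forall>i. (\<Sum>j\<in>UNIV. A i j * x$j) = D x * x$i"
  proof
    fix i
    have "x$i = N x i / D x" using x(2) by (metis f_def vec_lambda_beta)
    then show "(\<Sum>j\<in>UNIV. A i j * x$j) = D x * x$i" using Dpos[OF x(1)] by (simp add: N_def)
  qed
  moreover have "\<forall>i. x$i > 0"
  proof
    fix i
    have "x$i = N x i / D x" using x(2) by (metis f_def vec_lambda_beta)
    then show "x$i > 0" using Npos[OF x(1)] Dpos[OF x(1)] by simp
  qed
  ultimately show ?thesis using Dpos[OF x(1)] by blast
qed

lemma perron_nat:
  assumes card: "CARD('n::finite) = n"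
    and pos: "\<And>i j. i < n \<Longrightarrow> j < n \<Longrightarrow> A i j > (0::real)"
  shows "\<exists>r>0. \<exists>w. (\<forall>i<n. w i > 0) \<and> (\<forall>i<n. (\<Sum>j<n. A i j * w j) = r * w i)"
proof -
  obtain h :: "'n \<Rightarrow> nat" where h: "bij_betw h UNIV {0..<n}"
    using ex_bij_betw_finite_nat[of "UNIV::'n set"] card by auto
  have hlt: "h i < n" for i using h by (auto simp: bij_betw_def)
  obtain r w where r: "r > 0" and w: "\<forall>i. w i > 0" "\<forall>i. (\<Sum>j\<in>UNIV. A (h i) (h j) * w j) = r * w i"
    using perron_brouwer[of "\<lambda>i j. A (h i) (h j)"] pos hlt by blast
  define g where "g = inv_into UNIV h"
  have hg: "h (g k) = k" if "k < n" for k
    using h that unfolding g_def by (simp add: bij_betw_inv_into_right)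
  have sumeq: "(\<Sum>j<n. F j) = (\<Sum>j\<in>UNIV. F (h j))" for F :: "nat \<Rightarrow> real"
  proof -
    have "(\<Sum>j\<in>UNIV. F (h j)) = (\<Sum>j\<in>{0..<n}. F j)"
      by (rule sum.reindex_bij_betw[OF h])
    then show ?thesis by (simp add: atLeast0LessThan)
  qed
  show ?thesis
  proof (intro exI conjI allI impI)
    show "r > 0" by fact
    fix i assume i: "i < n"
    show "w (g i) > 0" using w by simp
    have "(\<Sum>j<n. A i j * w (g j)) = (\<Sum>j\<in>UNIV. A i (h j) * w (g (h j)))" by (rule sumeq)
    also have "\<dots> = (\<Sum>j\<in>UNIV. A (h (g i)) (h j) * w j)"
      using h hg[OF i] by (simp add: g_def bij_betw_def)
    also have "\<dots> = r * w (g i)" using w by simp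
    finally show "(\<Sum>j<n. A i j * w (g j)) = r * w (g i)" .
  qed
qed


lemma eig_bound_gen:
  fixes B :: "nat \<Rightarrow> nat \<Rightarrow> real"
  assumes Bnn: "\<And>i j. i < n \<Longrightarrow> j < n \<Longrightarrow> B i j \<ge> 0"
    and wpos: "\<And>i. i < n \<Longrightarrow> w i > 0"
    and eig: "\<And>i. i < n \<Longrightarrow> (\<Sum>j<n. B i j * u j) = x * u i"
    and nz: "\<exists>i<n. u i \<noteq> 0"
  obtains i0 where "i0 < n" "u i0 \<noteq> 0" "\<bar>x\<bar> * \<bar>u i0\<bar> \<le> (\<bar>u i0\<bar> / w i0) * (\<Sum>j<n. B i0 j * w j)"
proof -
  define m where "m = Max ((\<lambda>i. \<bar>u i\<bar> / w i) ` {..<n})"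
  have ne: "{..<n} \<noteq> {}" using nz by auto
  have "m \<in> (\<lambda>i. \<bar>u i\<bar> / w i) ` {..<n}" unfolding m_def by (rule Max_in) (use ne in auto)
  then obtain i0 where i0: "i0 < n" "m = \<bar>u i0\<bar> / w i0" by auto
  have ule: "\<bar>u j\<bar> \<le> m * w j" if "j < n" for j
  proof -
    have "\<bar>u j\<bar> / w j \<le> m" unfolding m_def using that by (intro Max_ge) auto
    then show ?thesis using wpos[OF that] by (simp add: divide_le_eq)
  qed
  obtain k where k: "k < n" "u k \<noteq> 0" using nz by auto
  have "0 < \<bar>u k\<bar> / w k" using k wpos[OF k(1)] by simp
  also have "\<dots> \<le> m" unfolding m_def using k by (intro Max_ge) auto
  finally have mpos: "m > 0" .
  have ui0: "\<bar>u i0\<bar> = m * w i0" using i0 wpos[OF i0(1)] by simp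
  have "\<bar>x\<bar> * \<bar>u i0\<bar> = \<bar>\<Sum>j<n. B i0 j * u j\<bar>" using eig[OF i0(1)] by (simp add: abs_mult)
  also have "\<dots> \<le> (\<Sum>j<n. \<bar>B i0 j * u j\<bar>)" by (rule sum_abs)
  also have "\<dots> \<le> (\<Sum>j<n. B i0 j * (m * w j))"
  proof (rule sum_mono)
    fix j assume "j \<in> {..<n}"
    then have j: "j < n" by simp
    show "\<bar>B i0 j * u j\<bar> \<le> B i0 j * (m * w j)"
      using Bnn[OF i0(1) j] ule[OF j] by (simp add: abs_mult mult_left_mono)
  qed
  also have "\<dots> = m * (\<Sum>j<n. B i0 j * w j)" by (simp add: sum_distrib_left algebra_simps)
  finally have fin: "\<bar>x\<bar> * \<bar>u i0\<bar> \<le> m * (\<Sum>j<n. B i0 j * w j)" .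
  have "u i0 \<noteq> 0" using ui0 mpos wpos[OF i0(1)] by auto
  then show ?thesis using fin i0(1) that unfolding i0(2) by blast
qed

lemma eig_bound:
  fixes B :: "nat \<Rightarrow> nat \<Rightarrow> real"
  assumes Bnn: "\<And>i j. i < n \<Longrightarrow> j < n \<Longrightarrow> B i j \<ge> 0"
    and wpos: "\<And>i. i < n \<Longrightarrow> w i > 0"
    and sup: "\<And>i. i < n \<Longrightarrow> (\<Sum>j<n. B i j * w j) \<le> c * w i"
    and eig: "\<And>i. i < n \<Longrightarrow> (\<Sum>j<n. B i j * u j) = x * u i"
    and nz: "\<exists>i<n. u i \<noteq> 0"
  shows "\<bar>x\<bar> \<le> c"
proof -
  obtain i0 where i0: "i0 < n" "u i0 \<noteq> 0" "\<bar>x\<bar> * \<bar>u i0\<bar> \<le> (\<bar>u i0\<bar> / w i0) * (\<Sum>j<n. B i0 j * w j)"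
    by (rule eig_bound_gen[OF Bnn wpos eig nz])
  have q: "\<bar>u i0\<bar> / w i0 \<ge> 0" using wpos[OF i0(1)] by simp
  have a: "(\<bar>u i0\<bar> / w i0) * (\<Sum>j<n. B i0 j * w j) \<le> (\<bar>u i0\<bar> / w i0) * (c * w i0)"
    by (rule mult_left_mono[OF sup[OF i0(1)] q])
  have b: "(\<bar>u i0\<bar> / w i0) * (c * w i0) = c * \<bar>u i0\<bar>" using wpos[OF i0(1)] by (simp add: field_simps)
  have "\<bar>x\<bar> * \<bar>u i0\<bar> \<le> c * \<bar>u i0\<bar>" using i0(3) a b by linarith
  moreover have "\<bar>u i0\<bar> > 0" using i0(2) by simp
  ultimately show ?thesis by (rule mult_right_le_imp_le)
qed

lemma eig_bound_strict:
  fixes B :: "nat \<Rightarrow> nat \<Rightarrow> real"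
  assumes Bnn: "\<And>i j. i < n \<Longrightarrow> j < n \<Longrightarrow> B i j \<ge> 0"
    and wpos: "\<And>i. i < n \<Longrightarrow> w i > 0"
    and sup: "\<And>i. i < n \<Longrightarrow> (\<Sum>j<n. B i j * w j) < c * w i"
    and eig: "\<And>i. i < n \<Longrightarrow> (\<Sum>j<n. B i j * u j) = x * u i"
    and nz: "\<exists>i<n. u i \<noteq> 0"
  shows "\<bar>x\<bar> < c"
proof -
  obtain i0 where i0: "i0 < n" "u i0 \<noteq> 0" "\<bar>x\<bar> * \<bar>u i0\<bar> \<le> (\<bar>u i0\<bar> / w i0) * (\<Sum>j<n. B i0 j * w j)"
    by (rule eig_bound_gen[OF Bnn wpos eig nz])
  have q: "\<bar>u i0\<bar> / w i0 > 0" using wpos[OF i0(1)] i0(2) by simp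
  have a: "(\<bar>u i0\<bar> / w i0) * (\<Sum>j<n. B i0 j * w j) < (\<bar>u i0\<bar> / w i0) * (c * w i0)"
    by (rule mult_strict_left_mono[OF sup[OF i0(1)] q])
  have b: "(\<bar>u i0\<bar> / w i0) * (c * w i0) = c * \<bar>u i0\<bar>" using wpos[OF i0(1)] by (simp add: field_simps)
  have lt: "\<bar>x\<bar> * \<bar>u i0\<bar> < c * \<bar>u i0\<bar>" using i0(3) a b by linarith
  have "\<bar>u i0\<bar> \<ge> 0" by simp
  from mult_right_less_imp_less[OF lt this] show ?thesis .
qed

lemma eig_lower:
  fixes B :: "nat \<Rightarrow> nat \<Rightarrow> real"
  assumes Bnn: "\<And>i j. i < n \<Longrightarrow> j < n \<Longrightarrow> B i j \<ge> 0"
    and wpos: "\<And>i. i < n \<Longrightarrow> w i > 0"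
    and inf: "\<And>i. i < n \<Longrightarrow> (\<Sum>j<n. B i j * w j) \<ge> c * w i"
    and upos: "\<And>i. i < n \<Longrightarrow> u i > 0"
    and eig: "\<And>i. i < n \<Longrightarrow> (\<Sum>j<n. B i j * u j) = x * u i"
    and n: "n > 0"
  shows "x \<ge> c"
proof -
  define m where "m = Min ((\<lambda>i. u i / w i) ` {..<n})"
  have ne: "{..<n} \<noteq> {}" using n by auto
  have "m \<in> (\<lambda>i. u i / w i) ` {..<n}" unfolding m_def by (rule Min_in) (use ne in auto)
  then obtain i0 where i0: "i0 < n" "m = u i0 / w i0" by auto
  have ule: "m * w j \<le> u j" if "j < n" for j
  proof -
    have "m \<le> u j / w j" unfolding m_def using that by (intro Min_le) auto
    then show ?thesis using wpos[OF that] by (simp add: le_divide_eq)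
  qed
  have mpos: "m > 0" using i0 wpos[OF i0(1)] upos[OF i0(1)] by simp
  have ui0: "u i0 = m * w i0" using i0 wpos[OF i0(1)] by simp
  have "c * u i0 = m * (c * w i0)" using ui0 by simp
  also have "\<dots> \<le> m * (\<Sum>j<n. B i0 j * w j)" using inf[OF i0(1)] mpos by simp
  also have "\<dots> = (\<Sum>j<n. B i0 j * (m * w j))" by (simp add: sum_distrib_left algebra_simps)
  also have "\<dots> \<le> (\<Sum>j<n. B i0 j * u j)"
  proof (rule sum_mono)
    fix j assume "j \<in> {..<n}"
    then have j: "j < n" by simp
    show "B i0 j * (m * w j) \<le> B i0 j * u j"
      using Bnn[OF i0(1) j] ule[OF j] by (simp add: mult_left_mono)
  qed
  also have "\<dots> = x * u i0" using eig[OF i0(1)] .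
  finally show ?thesis using upos[OF i0(1)] by simp
qed

lemma mat_vec_sum:
  assumes "A \<in> carrier_mat n n" "i < n"
  shows "(A *\<^sub>v vec n w) $ i = (\<Sum>j<n. A $$ (i, j) * w j)"
proof -
  have "(A *\<^sub>v vec n w) $ i = (\<Sum>j\<in>{0..<n}. row A i $ j * vec n w $ j)"
    using assms by (simp add: scalar_prod_def)
  also have "\<dots> = (\<Sum>j<n. A $$ (i, j) * w j)"
    unfolding atLeast0LessThan by (rule sum.cong) (use assms in auto)
  finally show ?thesis .
qed

lemma eigvec_sums:
  assumes A: "A \<in> carrier_mat n n" and ev: "eigenvalue A x"
  obtains u where "\<exists>i<n. u i \<noteq> 0" "\<And>i. i < n \<Longrightarrow> (\<Sum>j<n. A $$ (i, j) * u j) = x * u i"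
proof -
  obtain v where v: "v \<in> carrier_vec n" "v \<noteq> 0\<^sub>v n" "A *\<^sub>v v = x \<cdot>\<^sub>v v"
    using ev A unfolding eigenvalue_def eigenvector_def by auto
  have "\<exists>i<n. v $ i \<noteq> 0"
  proof (rule ccontr)
    assume "\<not> ?thesis"
    then have "v = 0\<^sub>v n" using v(1) by (intro eq_vecI) auto
    then show False using v(2) by simp
  qed
  moreover have "(\<Sum>j<n. A $$ (i, j) * v $ j) = x * v $ i" if "i < n" for i
  proof -
    have "(A *\<^sub>v v) $ i = x * v $ i" using v(3) v(1) that by simp
    then show ?thesis using that A v(1) by (simp add: scalar_prod_def atLeast0LessThan)
  qed
  ultimately show ?thesis using that by blast
qed

lemma max_root_perron:
  fixes A :: "real mat"
  assumes A: "A \<in> carrier_mat n n"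
    and Ann: "\<And>i j. i < n \<Longrightarrow> j < n \<Longrightarrow> A $$ (i, j) \<ge> 0"
    and wpos: "\<And>i. i < n \<Longrightarrow> w i > 0"
    and eig: "\<And>i. i < n \<Longrightarrow> (\<Sum>j<n. A $$ (i, j) * w j) = r * w i"
    and n: "n > 0"
  shows "max_real_root A = r"
proof -
  have cp: "char_poly A \<noteq> 0" using degree_monic_char_poly[OF A] by auto
  have fin: "finite {x. poly (char_poly A) x = 0}" by (rule poly_roots_finite[OF cp])
  have "eigenvalue A r"
    unfolding eigenvalue_def eigenvector_def
  proof (intro exI conjI)
    show "vec n w \<in> carrier_vec (dim_row A)" using A by simp
    show "vec n w \<noteq> 0\<^sub>v (dim_row A)"
    proof
      assume "vec n w = 0\<^sub>v (dim_row A)"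
      then have "vec n w $ 0 = 0" using A n by simp
      then show False using wpos[OF n] n by simp
    qed
    show "A *\<^sub>v vec n w = r \<cdot>\<^sub>v vec n w"
    proof (rule eq_vecI)
      fix i assume "i < dim_vec (r \<cdot>\<^sub>v vec n w)"
      then have i: "i < n" by simp
      show "(A *\<^sub>v vec n w) $ i = (r \<cdot>\<^sub>v vec n w) $ i"
        using mat_vec_sum[OF A i, of w] eig[OF i] i by simp
    qed (use A in simp)
  qed
  then have rr: "poly (char_poly A) r = 0" using eigenvalue_root_char_poly[OF A] by simp
  have le: "x \<le> r" if "poly (char_poly A) x = 0" for x
  proof -
    have "eigenvalue A x" using that eigenvalue_root_char_poly[OF A] by simp
    then obtain u where u: "\<exists>i<n. u i \<noteq> 0" "\<And>i. i < n \<Longrightarrow> (\<Sum>j<n. A $$ (i, j) * u j) = x * u i"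
      using eigvec_sums[OF A] by blast
    have "\<bar>x\<bar> \<le> r" by (rule eig_bound[OF Ann wpos _ u(2) u(1)]) (use eig in auto)
    then show ?thesis by simp
  qed
  show ?thesis unfolding max_real_root_def
    by (rule Max_eqI[OF fin]) (use rr le in auto)
qed

lemma poly_pos_beyond_roots:
  fixes p :: "real poly"
  assumes lc: "lead_coeff p > 0" and roots: "\<And>x. poly p x = 0 \<Longrightarrow> x < r"
  shows "poly p r > 0"
proof (rule ccontr)
  assume "\<not> poly p r > 0"
  then have le: "poly p r \<le> 0" by simp
  obtain N where N: "\<forall>x\<ge>N. poly p x \<ge> lead_coeff p" using poly_pinfty_gt_lc[OF lc] by blast
  define y where "y = max N (r + 1)"
  have "y \<ge> N" by (simp add: y_def)
  then have "poly p y \<ge> lead_coeff p" using N by blast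
  then have py: "poly p y > 0" using lc by linarith
  show False
  proof (cases "poly p r = 0")
    case True then show False using roots by force
  next
    case False
    then have "poly p r < 0" using le by simp
    moreover have "r < y" by (simp add: y_def)
    ultimately obtain z where "r < z" "z < y" "poly p z = 0" using poly_IVT_pos[of r y p] py by auto
    then show False using roots by force
  qed
qed

lemma pderiv_char_poly_pos:
  fixes A :: "real mat"
  assumes A: "A \<in> carrier_mat n n"
    and Apos: "\<And>i j. i < n \<Longrightarrow> j < n \<Longrightarrow> A $$ (i, j) > 0"
    and wpos: "\<And>i. i < n \<Longrightarrow> w i > 0"
    and eig: "\<And>i. i < n \<Longrightarrow> (\<Sum>j<n. A $$ (i, j) * w j) = r * w i"
    and n: "n > 0"
  shows "poly (pderiv (char_poly A)) r > 0"
proof -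
  obtain m where nm: "n = Suc m" using n by (cases n) auto
  have trm: "poly (char_poly (mat_delete A i i)) r > 0" if i: "i < n" for i
  proof -
    define B where "B = mat_delete A i i"
    have B: "B \<in> carrier_mat m m" unfolding B_def using mat_delete_carrier[OF A] nm by simp
    have Bidx: "B $$ (k, l) = A $$ (insert_index i k, insert_index i l)" if "k < m" "l < m" for k l
      unfolding B_def using mat_delete_index[of A m i i k l] A nm i that by simp
    have ins_lt: "insert_index i k < n" if "k < m" for k
      using that nm by (simp add: insert_index_def)
    define w' where "w' = (\<lambda>k. w (insert_index i k))"
    have sumre: "(\<Sum>l<m. f (insert_index i l)) = (\<Sum>l\<in>{0..<n} - {i}. f l)" for f :: "nat \<Rightarrow> real"
    proof -
      have "(\<Sum>l\<in>{0..<n} - {i}. f l) = (\<Sum>l\<in>insert_index i ` {0..<m}. f l)"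
        using insert_index_image[of i m] i nm by simp
      also have "\<dots> = (\<Sum>l\<in>{0..<m}. f (insert_index i l))"
        by (rule sum.reindex[unfolded comp_def]) (rule insert_index_inj_on)
      finally show ?thesis by (simp add: atLeast0LessThan)
    qed
    have strict: "(\<Sum>l<m. B $$ (k, l) * w' l) < r * w' k" if k: "k < m" for k
    proof -
      have "(\<Sum>l<m. B $$ (k, l) * w' l) = (\<Sum>l<m. A $$ (insert_index i k, insert_index i l) * w (insert_index i l))"
        using Bidx k unfolding w'_def by simp
      also have "\<dots> = (\<Sum>l\<in>{0..<n} - {i}. A $$ (insert_index i k, l) * w l)"
        by (rule sumre)
      also have "\<dots> = (\<Sum>l\<in>{0..<n}. A $$ (insert_index i k, l) * w l) - A $$ (insert_index i k, i) * w i"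
        using i by (simp add: sum_diff1)
      also have "\<dots> < (\<Sum>l\<in>{0..<n}. A $$ (insert_index i k, l) * w l)"
        using Apos[OF ins_lt[OF k] i] wpos[OF i] by simp
      also have "\<dots> = r * w' k" using eig[OF ins_lt[OF k]] unfolding w'_def by (simp add: atLeast0LessThan)
      finally show ?thesis .
    qed
    have lc: "lead_coeff (char_poly B) = 1" using degree_monic_char_poly[OF B] by simp
    have roots: "x < r" if "poly (char_poly B) x = 0" for x
    proof -
      have "eigenvalue B x" using that eigenvalue_root_char_poly[OF B] by simp
      then obtain u where u: "\<exists>i<m. u i \<noteq> 0" "\<And>i. i < m \<Longrightarrow> (\<Sum>j<m. B $$ (i, j) * u j) = x * u i"
        using eigvec_sums[OF B] by blast
      have "\<bar>x\<bar> < r"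
        by (rule eig_bound_strict[OF _ _ strict u(2) u(1)])
           (use Apos Bidx ins_lt wpos in \<open>auto simp: w'_def less_imp_le\<close>)
      then show ?thesis by simp
    qed
    show ?thesis using poly_pos_beyond_roots[of "char_poly B" r] lc roots unfolding B_def by simp
  qed
  have "poly (pderiv (char_poly A)) r = (\<Sum>i<n. poly (char_poly (mat_delete A i i)) r)"
    unfolding pderiv_char_poly[OF A] by (simp add: poly_sum)
  also have "\<dots> > 0" using trm n by (intro sum_pos) auto
  finally show ?thesis .
qed


primrec Pw :: "'a set \<Rightarrow> ('a \<Rightarrow> 'a \<Rightarrow> real) \<Rightarrow> nat \<Rightarrow> 'a \<Rightarrow> 'a \<Rightarrow> real" where
  "Pw S W 0 a b = (if a = b then 1 else 0)"
| "Pw S W (Suc n) a b = (\<Sum>c\<in>S. Pw S W n a c * W c b)"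

lemma sum_PiE_insert:
  assumes "x \<notin> I" "finite I" "\<And>i. finite (T i)"
  shows "(\<Sum>\<sigma>\<in>Pi\<^sub>E (insert x I) T. F \<sigma>) = (\<Sum>y\<in>T x. \<Sum>\<tau>\<in>Pi\<^sub>E I T. F (\<tau>(x := y)))"
proof -
  have "(\<Sum>\<sigma>\<in>Pi\<^sub>E (insert x I) T. F \<sigma>) = (\<Sum>\<sigma>\<in>(\<lambda>(y, g). g(x := y)) ` (T x \<times> Pi\<^sub>E I T). F \<sigma>)"
    by (simp add: PiE_insert_eq)
  also have "\<dots> = (\<Sum>p\<in>T x \<times> Pi\<^sub>E I T. F ((\<lambda>(y, g). g(x := y)) p))"
    by (rule sum.reindex[unfolded comp_def]) (rule inj_combinator[OF assms(1)])
  also have "\<dots> = (\<Sum>y\<in>T x. \<Sum>\<tau>\<in>Pi\<^sub>E I T. F (\<tau>(x := y)))"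
    by (simp add: sum.cartesian_product case_prod_unfold)
  finally show ?thesis .
qed

lemma delta_sum:
  assumes "finite S" "a \<in> S"
  shows "(\<Sum>b\<in>S. Pw S W 0 a b * f b) = f a"
proof -
  have "(\<Sum>b\<in>S. Pw S W 0 a b * f b) = (\<Sum>b\<in>S. if a = b then f b else 0)" by (rule sum.cong) auto
  also have "\<dots> = f a" using assms by simp
  finally show ?thesis .
qed

lemma cyc_expand:
  assumes S: "finite S"
  shows "(\<Sum>\<sigma>\<in>Pi\<^sub>E {..<Suc n} (\<lambda>_. S). (\<Prod>m<n. W (\<sigma> m) (\<sigma> (Suc m))) * g (\<sigma> 0) (\<sigma> n))
       = (\<Sum>a\<in>S. \<Sum>b\<in>S. Pw S W n a b * g a b)"
proof (induction n arbitrary: g)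
  case 0
  have "(\<Sum>\<sigma>\<in>Pi\<^sub>E {..<Suc 0} (\<lambda>_. S). (\<Prod>m<0. W (\<sigma> m) (\<sigma> (Suc m))) * g (\<sigma> 0) (\<sigma> 0))
      = (\<Sum>\<sigma>\<in>Pi\<^sub>E (insert (0::nat) {}) (\<lambda>_. S). g (\<sigma> 0) (\<sigma> 0))" by (simp add: lessThan_Suc)
  also have "\<dots> = (\<Sum>y\<in>S. g y y)" using S by (subst sum_PiE_insert) auto
  also have "\<dots> = (\<Sum>a\<in>S. \<Sum>b\<in>S. Pw S W 0 a b * g a b)"
    using S by (intro sum.cong refl) (simp only: delta_sum)
  finally show ?case by simp
next
  case (Suc n)
  have ins: "{..<Suc (Suc n)} = insert (Suc n) {..<Suc n}" by auto
  have "(\<Sum>\<sigma>\<in>Pi\<^sub>E {..<Suc (Suc n)} (\<lambda>_. S). (\<Prod>m<Suc n. W (\<sigma> m) (\<sigma> (Suc m))) * g (\<sigma> 0) (\<sigma> (Suc n)))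
      = (\<Sum>y\<in>S. \<Sum>\<tau>\<in>Pi\<^sub>E {..<Suc n} (\<lambda>_. S).
           (\<Prod>m<Suc n. W ((\<tau>(Suc n := y)) m) ((\<tau>(Suc n := y)) (Suc m))) * g ((\<tau>(Suc n := y)) 0) ((\<tau>(Suc n := y)) (Suc n)))"
    unfolding ins using S by (subst sum_PiE_insert) auto
  also have "\<dots> = (\<Sum>y\<in>S. \<Sum>\<tau>\<in>Pi\<^sub>E {..<Suc n} (\<lambda>_. S).
           (\<Prod>m<n. W (\<tau> m) (\<tau> (Suc m))) * (W (\<tau> n) y * g (\<tau> 0) y))"
  proof (intro sum.cong refl)
    fix y \<tau>
    have "(\<Prod>m<n. W ((\<tau>(Suc n := y)) m) ((\<tau>(Suc n := y)) (Suc m))) = (\<Prod>m<n. W (\<tau> m) (\<tau> (Suc m)))"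
      by (intro prod.cong) auto
    then show "(\<Prod>m<Suc n. W ((\<tau>(Suc n := y)) m) ((\<tau>(Suc n := y)) (Suc m))) * g ((\<tau>(Suc n := y)) 0) ((\<tau>(Suc n := y)) (Suc n))
        = (\<Prod>m<n. W (\<tau> m) (\<tau> (Suc m))) * (W (\<tau> n) y * g (\<tau> 0) y)"
      by (simp add: lessThan_Suc)
  qed
  also have "\<dots> = (\<Sum>y\<in>S. \<Sum>a\<in>S. \<Sum>b\<in>S. Pw S W n a b * (W b y * g a y))"
    using Suc.IH[of "\<lambda>a b. W b _ * g a _"] by simp
  also have "\<dots> = (\<Sum>a\<in>S. \<Sum>y\<in>S. (\<Sum>b\<in>S. Pw S W n a b * W b y) * g a y)"
    by (subst sum.swap) (simp add: sum_distrib_right mult.assoc)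
  also have "\<dots> = (\<Sum>a\<in>S. \<Sum>b\<in>S. Pw S W (Suc n) a b * g a b)" by simp
  finally show ?case .
qed

lemma Pw_nonneg:
  assumes "\<And>a b. a \<in> S \<Longrightarrow> b \<in> S \<Longrightarrow> W a b \<ge> 0" "b \<in> S"
  shows "Pw S W n a b \<ge> 0"
  using assms(2)
proof (induction n arbitrary: b)
  case 0 then show ?case by simp
next
  case (Suc n) then show ?case using assms(1) by (auto intro!: sum_nonneg mult_nonneg_nonneg)
qed

lemma Pw_eig:
  assumes S: "finite S" and eig: "\<And>a. a \<in> S \<Longrightarrow> (\<Sum>b\<in>S. W a b * v b) = \<rho> * v a" and a: "a \<in> S"
  shows "(\<Sum>b\<in>S. Pw S W n a b * v b) = \<rho> ^ n * v a"
proof (induction n)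
  case 0 then show ?case using S a by (simp only: delta_sum power_0 mult_1)
next
  case (Suc n)
  have "(\<Sum>b\<in>S. Pw S W (Suc n) a b * v b) = (\<Sum>c\<in>S. Pw S W n a c * (\<Sum>b\<in>S. W c b * v b))"
    by (simp add: sum_distrib_right sum_distrib_left mult.assoc) (rule sum.swap)
  also have "\<dots> = (\<Sum>c\<in>S. Pw S W n a c * (\<rho> * v c))"
    by (rule sum.cong) (simp_all add: eig)
  also have "\<dots> = (\<Sum>c\<in>S. Pw S W n a c * v c) * \<rho>"
    unfolding sum_distrib_right by (rule sum.cong) auto
  also have "\<dots> = \<rho> ^ Suc n * v a" using Suc by simp
  finally show ?case .
qed

definition Zc :: "'a set \<Rightarrow> ('a \<Rightarrow> 'a \<Rightarrow> real) \<Rightarrow> nat \<Rightarrow> real" where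
  "Zc S W M = (\<Sum>\<sigma>\<in>Pi\<^sub>E {..<M} (\<lambda>_. S). \<Prod>m<M. W (\<sigma> m) (\<sigma> (Suc m mod M)))"

lemma Zc_Suc:
  assumes "finite S"
  shows "Zc S W (Suc n) = (\<Sum>a\<in>S. \<Sum>b\<in>S. Pw S W n a b * W b a)"
proof -
  have "Zc S W (Suc n) = (\<Sum>\<sigma>\<in>Pi\<^sub>E {..<Suc n} (\<lambda>_. S). (\<Prod>m<n. W (\<sigma> m) (\<sigma> (Suc m))) * W (\<sigma> n) (\<sigma> 0))"
    unfolding Zc_def
  proof (intro sum.cong refl)
    fix \<sigma> :: "nat \<Rightarrow> 'a"
    have "(\<Prod>m<n. W (\<sigma> m) (\<sigma> (Suc m mod Suc n))) = (\<Prod>m<n. W (\<sigma> m) (\<sigma> (Suc m)))"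
      by (intro prod.cong) auto
    then show "(\<Prod>m<Suc n. W (\<sigma> m) (\<sigma> (Suc m mod Suc n))) = (\<Prod>m<n. W (\<sigma> m) (\<sigma> (Suc m))) * W (\<sigma> n) (\<sigma> 0)"
      by (simp add: lessThan_Suc)
  qed
  also have "\<dots> = (\<Sum>a\<in>S. \<Sum>b\<in>S. Pw S W n a b * W b a)"
    by (rule cyc_expand[OF assms, where g="\<lambda>a b. W b a" and W=W and n=n])
  finally show ?thesis .
qed

lemma Zc_bounds:
  assumes S: "finite S" "S \<noteq> {}"
    and Wpos: "\<And>a b. a \<in> S \<Longrightarrow> b \<in> S \<Longrightarrow> W a b > 0"
    and vpos: "\<And>a. a \<in> S \<Longrightarrow> v a > 0"
    and eig: "\<And>a. a \<in> S \<Longrightarrow> (\<Sum>b\<in>S. W a b * v b) = \<rho> * v a"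
  shows "\<exists>c C. c > 0 \<and> C > 0 \<and> (\<forall>n. c * \<rho> ^ n \<le> Zc S W (Suc n) \<and> Zc S W (Suc n) \<le> C * \<rho> ^ n)"
proof -
  define Wl where "Wl = Min ((\<lambda>(a, b). W b a) ` (S \<times> S))"
  define Wu where "Wu = Max ((\<lambda>(a, b). W b a) ` (S \<times> S))"
  define vl where "vl = Min (v ` S)"
  define vu where "vu = Max (v ` S)"
  have fin2: "finite ((\<lambda>(a, b). W b a) ` (S \<times> S))" using S by simp
  have ne2: "(\<lambda>(a, b). W b a) ` (S \<times> S) \<noteq> {}" using S by simp
  have Wl: "Wl \<le> W b a" "W b a \<le> Wu" if "a \<in> S" "b \<in> S" for a b
    using that fin2 unfolding Wl_def Wu_def by (auto intro!: Min_le Max_ge)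
  have vl: "vl \<le> v a" "v a \<le> vu" if "a \<in> S" for a
    using that S unfolding vl_def vu_def by (auto intro!: Min_le Max_ge)
  have "Wl \<in> (\<lambda>(a, b). W b a) ` (S \<times> S)" unfolding Wl_def by (rule Min_in[OF fin2 ne2])
  then have Wlpos: "Wl > 0" using Wpos by auto
  have "vu \<in> v ` S" unfolding vu_def using S by (intro Max_in) auto
  then have vupos: "vu > 0" using vpos by auto
  have "vl \<in> v ` S" unfolding vl_def using S by (intro Min_in) auto
  then have vlpos: "vl > 0" using vpos by auto
  have "Wu \<ge> Wl" using S Wl by (meson ex_in_conv order_trans)
  then have Wupos: "Wu > 0" using Wlpos by simp
  define V where "V = (\<Sum>a\<in>S. v a)"
  have Vpos: "V > 0" unfolding V_def using S vpos by (intro sum_pos) auto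
  have Pnn: "Pw S W n a b \<ge> 0" if "b \<in> S" for n a b
    by (rule Pw_nonneg) (use Wpos that in \<open>auto intro: less_imp_le\<close>)
  have up: "Zc S W (Suc n) \<le> (Wu / vl * V) * \<rho> ^ n" for n
  proof -
    have "Zc S W (Suc n) = (\<Sum>a\<in>S. \<Sum>b\<in>S. Pw S W n a b * W b a)" by (rule Zc_Suc[OF S(1)])
    also have "\<dots> \<le> (\<Sum>a\<in>S. \<Sum>b\<in>S. Pw S W n a b * ((Wu / vl) * v b))"
    proof (intro sum_mono mult_left_mono)
      fix a b assume ab: "a \<in> S" "b \<in> S"
      have "W b a \<le> Wu" using Wl ab by blast
      also have "Wu \<le> (Wu / vl) * v b" using vl(1)[OF ab(2)] vlpos Wupos
        by (simp add: field_simps mult_left_mono)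
      finally show "W b a \<le> (Wu / vl) * v b" .
      show "Pw S W n a b \<ge> 0" by (rule Pnn[OF ab(2)])
    qed
    also have "\<dots> = (Wu / vl) * (\<Sum>a\<in>S. \<Sum>b\<in>S. Pw S W n a b * v b)"
      by (simp add: sum_distrib_left algebra_simps)
    also have "\<dots> = (Wu / vl) * (\<Sum>a\<in>S. \<rho> ^ n * v a)"
      using Pw_eig[OF S(1) eig] by simp
    also have "\<dots> = (Wu / vl * V) * \<rho> ^ n" by (simp add: V_def sum_distrib_left sum_divide_distrib algebra_simps)
    finally show ?thesis .
  qed
  have lo: "(Wl / vu * V) * \<rho> ^ n \<le> Zc S W (Suc n)" for n
  proof -
    have "(Wl / vu * V) * \<rho> ^ n = (Wl / vu) * (\<Sum>a\<in>S. \<rho> ^ n * v a)"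
      by (simp add: V_def sum_distrib_left sum_divide_distrib algebra_simps)
    also have "\<dots> = (Wl / vu) * (\<Sum>a\<in>S. \<Sum>b\<in>S. Pw S W n a b * v b)"
      using Pw_eig[OF S(1) eig] by simp
    also have "\<dots> = (\<Sum>a\<in>S. \<Sum>b\<in>S. Pw S W n a b * ((Wl / vu) * v b))"
      by (simp add: sum_distrib_left algebra_simps)
    also have "\<dots> \<le> (\<Sum>a\<in>S. \<Sum>b\<in>S. Pw S W n a b * W b a)"
    proof (intro sum_mono mult_left_mono)
      fix a b assume ab: "a \<in> S" "b \<in> S"
      have "(Wl / vu) * v b \<le> Wl" using vl(2)[OF ab(2)] vupos Wlpos
        by (simp add: field_simps mult_left_mono)
      also have "Wl \<le> W b a" using Wl ab by blast
      finally show "(Wl / vu) * v b \<le> W b a" .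
      show "Pw S W n a b \<ge> 0" by (rule Pnn[OF ab(2)])
    qed
    also have "\<dots> = Zc S W (Suc n)" by (rule Zc_Suc[OF S(1), symmetric])
    finally show ?thesis .
  qed
  show ?thesis
    by (rule exI[of _ "Wl / vu * V"], rule exI[of _ "Wu / vl * V"])
       (use up lo Wlpos vupos Vpos Wupos vlpos in auto)
qed

lemma Zc_limit:
  assumes S: "finite S" "S \<noteq> {}"
    and Wpos: "\<And>a b. a \<in> S \<Longrightarrow> b \<in> S \<Longrightarrow> W a b > 0"
    and vpos: "\<And>a. a \<in> S \<Longrightarrow> v a > 0"
    and eig: "\<And>a. a \<in> S \<Longrightarrow> (\<Sum>b\<in>S. W a b * v b) = \<rho> * v a"
    and rho: "\<rho> > 0"
  shows "(\<lambda>M. ln (Zc S W M) / real M) \<longlonglongrightarrow> ln \<rho>"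
proof -
  obtain c C where cC: "c > 0" "C > 0" "\<And>n. c * \<rho> ^ n \<le> Zc S W (Suc n)" "\<And>n. Zc S W (Suc n) \<le> C * \<rho> ^ n"
    using Zc_bounds[OF S Wpos vpos eig] by blast
  have lo: "ln \<rho> + (ln c - ln \<rho>) / real M \<le> ln (Zc S W M) / real M" if M: "M \<ge> 1" for M
  proof -
    obtain n where n: "M = Suc n" using M by (cases M) auto
    have pos: "c * \<rho> ^ n > 0" using cC rho by simp
    have "ln (c * \<rho> ^ n) \<le> ln (Zc S W M)" using cC(3)[of n] pos n by simp
    then have "ln c + n * ln \<rho> \<le> ln (Zc S W M)" using cC rho by (simp add: ln_mult ln_realpow)
    then have "ln \<rho> * M + (ln c - ln \<rho>) \<le> ln (Zc S W M)" using n by (simp add: algebra_simps)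
    then have "(ln \<rho> * M + (ln c - ln \<rho>)) / M \<le> ln (Zc S W M) / M" using M by (intro divide_right_mono) auto
    moreover have "(ln \<rho> * M + (ln c - ln \<rho>)) / M = ln \<rho> + (ln c - ln \<rho>) / M" using M by (simp add: field_simps)
    ultimately show ?thesis by simp
  qed
  have up: "ln (Zc S W M) / real M \<le> ln \<rho> + (ln C - ln \<rho>) / real M" if M: "M \<ge> 1" for M
  proof -
    obtain n where n: "M = Suc n" using M by (cases M) auto
    have pos: "c * \<rho> ^ n > 0" using cC rho by simp
    have zpos: "Zc S W M > 0" using cC(3)[of n] pos n by simp
    have "ln (Zc S W M) \<le> ln (C * \<rho> ^ n)" using cC(4)[of n] zpos n by simp
    then have "ln (Zc S W M) \<le> ln C + n * ln \<rho>" using cC rho by (simp add: ln_mult ln_realpow)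
    then have "ln (Zc S W M) \<le> ln \<rho> * M + (ln C - ln \<rho>)" using n by (simp add: algebra_simps)
    then have "ln (Zc S W M) / M \<le> (ln \<rho> * M + (ln C - ln \<rho>)) / M" using M by (intro divide_right_mono) auto
    moreover have "(ln \<rho> * M + (ln C - ln \<rho>)) / M = ln \<rho> + (ln C - ln \<rho>) / M" using M by (simp add: field_simps)
    ultimately show ?thesis by simp
  qed
  have t1: "(\<lambda>M. ln \<rho> + (ln c - ln \<rho>) / real M) \<longlonglongrightarrow> ln \<rho> + 0"
    by (intro tendsto_intros)
  have t2: "(\<lambda>M. ln \<rho> + (ln C - ln \<rho>) / real M) \<longlonglongrightarrow> ln \<rho> + 0"
    by (intro tendsto_intros)
  show ?thesis
    by (rule tendsto_sandwich[OF _ _ t1[simplified] t2[simplified]])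
       (use lo up in \<open>auto intro: eventually_sequentiallyI[of 1]\<close>)
qed


lemma poly_sum_N:
  fixes p :: "real poly"
  assumes "degree p \<le> N"
  shows "poly p y = (\<Sum>k\<le>N. coeff p k * y ^ k)"
proof -
  have "poly p y = (\<Sum>k\<le>degree p. coeff p k * y ^ k)" by (rule poly_altdef)
  also have "\<dots> = (\<Sum>k\<le>N. coeff p k * y ^ k)"
    by (rule sum.mono_neutral_left) (use assms in \<open>auto simp: coeff_eq_0\<close>)
  finally show ?thesis .
qed

lemma implicit_root_deriv:
  fixes P :: "real \<Rightarrow> real poly" and lam :: "real \<Rightarrow> real"
  assumes deg: "\<And>s. degree (P s) \<le> N"
    and dc: "\<And>k. k \<le> N \<Longrightarrow> ((\<lambda>s. coeff (P s) k) has_real_derivative d k) (at t)"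
    and cont: "isCont lam t"
    and root_ev: "eventually (\<lambda>s. poly (P s) (lam s) = 0) (at t)"
    and root: "poly (P t) (lam t) = 0"
    and nz: "poly (pderiv (P t)) (lam t) \<noteq> 0"
  shows "(lam has_real_derivative (- (\<Sum>k\<le>N. d k * lam t ^ k) / poly (pderiv (P t)) (lam t))) (at t)"
proof -
  define x0 where "x0 = lam t"
  define p where "p = P t"
  define D where "D = poly (pderiv p) x0"
  define Dq where "Dq = (\<lambda>s. \<Sum>k\<le>N. ((coeff (P s) k - coeff p k) / (s - t)) * lam s ^ k)"
  define G where "G = (\<lambda>y. if y = x0 then D else (poly p y - poly p x0) / (y - x0))"
  have lamt: "(lam \<longlongrightarrow> x0) (at t)" using cont unfolding isCont_def x0_def .
  have Dq_lim: "(Dq \<longlongrightarrow> (\<Sum>k\<le>N. d k * x0 ^ k)) (at t)"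
    unfolding Dq_def
  proof (intro tendsto_sum tendsto_mult tendsto_power lamt)
    fix k assume "k \<in> {..N}"
    then show "((\<lambda>s. (coeff (P s) k - coeff p k) / (s - t)) \<longlongrightarrow> d k) (at t)"
      using dc[of k] unfolding has_field_derivative_iff p_def by simp
  qed
  have G_cont: "isCont G x0"
  proof -
    have "((\<lambda>y. (poly p y - poly p x0) / (y - x0)) \<longlongrightarrow> D) (at x0)"
      using poly_DERIV[of p x0] unfolding has_field_derivative_iff D_def .
    then have "(G \<longlongrightarrow> D) (at x0)"
    proof (rule Lim_transform_eventually)
      show "\<forall>\<^sub>F y in at x0. (poly p y - poly p x0) / (y - x0) = G y"
        using eventually_neq_at_within[of x0 x0 UNIV] by eventually_elim (simp add: G_def)
    qed
    then show ?thesis unfolding isCont_def G_def by simp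
  qed
  have G_lim: "((\<lambda>s. G (lam s)) \<longlongrightarrow> D) (at t)"
    using isCont_tendsto_compose[OF G_cont lamt] by (simp add: G_def)
  have G_ne: "eventually (\<lambda>s. G (lam s) \<noteq> 0) (at t)"
    using tendsto_imp_eventually_ne[OF G_lim] nz unfolding D_def p_def x0_def by simp
  have key: "(lam s - x0) * G (lam s) = - ((s - t) * Dq s)"
    if s: "s \<noteq> t" "poly (P s) (lam s) = 0" for s
  proof -
    have px0: "poly p x0 = 0" using root unfolding p_def x0_def .
    have "(lam s - x0) * G (lam s) = poly p (lam s) - poly p x0"
      by (cases "lam s = x0") (simp_all add: G_def)
    also have "\<dots> = poly p (lam s) - poly (P s) (lam s)" using px0 s by simp
    also have "\<dots> = (\<Sum>k\<le>N. coeff p k * lam s ^ k) - (\<Sum>k\<le>N. coeff (P s) k * lam s ^ k)"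
      using deg unfolding p_def by (simp add: poly_sum_N[of _ N])
    also have "\<dots> = - (\<Sum>k\<le>N. (coeff (P s) k - coeff p k) * lam s ^ k)"
      by (simp add: left_diff_distrib sum_subtractf)
    also have "\<dots> = - ((s - t) * Dq s)"
    proof -
      have e: "(s - t) * ((coeff (P s) k - coeff p k) / (s - t) * lam s ^ k) = (coeff (P s) k - coeff p k) * lam s ^ k" for k
        using s(1) by simp
      show ?thesis by (simp only: Dq_def sum_distrib_left e)
    qed
    finally show ?thesis .
  qed
  have lim: "((\<lambda>s. - Dq s / G (lam s)) \<longlongrightarrow> - (\<Sum>k\<le>N. d k * x0 ^ k) / D) (at t)"
    by (intro tendsto_intros Dq_lim G_lim) (use nz in \<open>simp add: D_def p_def x0_def\<close>)
  have "((\<lambda>s. (lam s - lam t) / (s - t)) \<longlongrightarrow> - (\<Sum>k\<le>N. d k * x0 ^ k) / D) (at t)"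
  proof (rule Lim_transform_eventually[OF lim])
    show "\<forall>\<^sub>F s in at t. - Dq s / G (lam s) = (lam s - lam t) / (s - t)"
      using eventually_neq_at_within[of t t UNIV] root_ev G_ne
    proof eventually_elim
      case (elim s)
      have "(lam s - x0) * G (lam s) = - ((s - t) * Dq s)" using key elim by blast
      then show ?case using elim unfolding x0_def by (simp add: field_simps)
    qed
  qed
  then show ?thesis unfolding has_field_derivative_iff D_def p_def x0_def .
qed


definition sm :: "(real \<Rightarrow> real) \<Rightarrow> bool" where
  "sm f \<longleftrightarrow> (\<exists>g. \<forall>t>0. (f has_real_derivative g t) (at t) \<and> g differentiable (at t))"

lemma sm_D:
  assumes "sm f" "t > 0"
  shows "f differentiable (at t)"
  using assms unfolding sm_def real_differentiable_def by blast

lemma sm_const: "sm (\<lambda>t. c)"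
  unfolding sm_def by (rule exI[of _ "\<lambda>_. 0"]) auto

lemma sm_add:
  assumes "sm f" "sm g" shows "sm (\<lambda>t. f t + g t)"
proof -
  obtain f' g' where f: "\<forall>t>0. (f has_real_derivative f' t) (at t) \<and> f' differentiable (at t)"
    and g: "\<forall>t>0. (g has_real_derivative g' t) (at t) \<and> g' differentiable (at t)"
    using assms unfolding sm_def by blast
  show ?thesis unfolding sm_def
    by (rule exI[of _ "\<lambda>t. f' t + g' t"]) (use f g in \<open>auto intro!: derivative_intros\<close>)
qed

lemma sm_minus:
  assumes "sm f" shows "sm (\<lambda>t. - f t)"
proof -
  obtain f' where f: "\<forall>t>0. (f has_real_derivative f' t) (at t) \<and> f' differentiable (at t)"
    using assms unfolding sm_def by blast
  show ?thesis unfolding sm_def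
    by (rule exI[of _ "\<lambda>t. - f' t"]) (use f in \<open>auto intro!: derivative_intros\<close>)
qed

lemma sm_mult:
  assumes "sm f" "sm g" shows "sm (\<lambda>t. f t * g t)"
proof -
  obtain f' g' where f: "\<forall>t>0. (f has_real_derivative f' t) (at t) \<and> f' differentiable (at t)"
    and g: "\<forall>t>0. (g has_real_derivative g' t) (at t) \<and> g' differentiable (at t)"
    using assms unfolding sm_def by blast
  have fd: "f differentiable (at t)" "g differentiable (at t)" if "t > 0" for t
    using f g that unfolding real_differentiable_def by blast+
  show ?thesis unfolding sm_def
  proof (rule exI[of _ "\<lambda>t. f' t * g t + f t * g' t"], intro allI impI conjI)
    fix t :: real assume t: "t > 0"
    show "((\<lambda>t. f t * g t) has_real_derivative f' t * g t + f t * g' t) (at t)"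
      using f g t by (auto intro!: derivative_eq_intros)
    show "(\<lambda>t. f' t * g t + f t * g' t) differentiable (at t)"
      using f g fd t by (auto intro!: derivative_intros)
  qed
qed

lemma sm_sum:
  assumes "finite I" "\<And>i. i \<in> I \<Longrightarrow> sm (f i)"
  shows "sm (\<lambda>t. \<Sum>i\<in>I. f i t)"
  using assms
proof (induction I rule: finite_induct)
  case empty then show ?case by (simp add: sm_const)
next
  case (insert x F) then show ?case by (simp add: sm_add)
qed

lemma sm_exp_inv: "sm (\<lambda>t. exp (c * inverse t))"
  unfolding sm_def
proof (rule exI[of _ "\<lambda>t. exp (c * inverse t) * (c * - (inverse t * inverse t))"], intro allI impI conjI)
  fix t :: real assume t: "t > 0"
  show "((\<lambda>t. exp (c * inverse t)) has_real_derivative exp (c * inverse t) * (c * - (inverse t * inverse t))) (at t)"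
    using t by (auto intro!: derivative_eq_intros simp: power2_eq_square)
  show "(\<lambda>t. exp (c * inverse t) * (c * - (inverse t * inverse t))) differentiable (at t)"
  proof -
    have "(\<lambda>t. exp (c * inverse t)) differentiable (at t)"
      unfolding real_differentiable_def using t by (auto intro!: exI derivative_eq_intros)
    then show ?thesis using t by (auto intro!: derivative_intros)
  qed
qed

lemma sm_coeff_mult:
  fixes p q :: "real \<Rightarrow> real poly"
  assumes "\<And>k. sm (\<lambda>t. coeff (p t) k)" "\<And>k. sm (\<lambda>t. coeff (q t) k)"
  shows "sm (\<lambda>t. coeff (p t * q t) k)"
  unfolding coeff_mult by (intro sm_sum sm_mult assms) auto

lemma sm_coeff_prod:
  fixes Q :: "'i \<Rightarrow> real \<Rightarrow> real poly"
  assumes "finite I" "\<And>i k. i \<in> I \<Longrightarrow> sm (\<lambda>t. coeff (Q i t) k)"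
  shows "sm (\<lambda>t. coeff (\<Prod>i\<in>I. Q i t) k)"
  using assms
proof (induction I arbitrary: k rule: finite_induct)
  case empty then show ?case by (simp add: sm_const)
next
  case (insert x F)
  then show ?case by (simp add: sm_coeff_mult)
qed

lemma sm_coeff_det:
  fixes M :: "real \<Rightarrow> real poly mat"
  assumes dim: "\<And>t. M t \<in> carrier_mat n n"
    and ent: "\<And>i j k. i < n \<Longrightarrow> j < n \<Longrightarrow> sm (\<lambda>t. coeff (M t $$ (i, j)) k)"
  shows "sm (\<lambda>t. coeff (det (M t)) k)"
proof -
  have eq: "(\<lambda>t. coeff (det (M t)) k) = (\<lambda>t. \<Sum>p\<in>{p. p permutes {0..<n}}. coeff (signof p * (\<Prod>i = 0..<n. M t $$ (i, p i))) k)"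
    by (rule ext) (simp add: det_def'[OF dim] coeff_sum)
  show ?thesis unfolding eq
  proof (rule sm_sum)
    show "finite {p. p permutes {0..<n}}" by (rule finite_permutations) simp
    fix p assume p: "p \<in> {p. p permutes {0..<n}}"
    have pi: "p i < n" if "i < n" for i using p that permutes_in_image[of p "{0..<n}" i] by auto
    show "sm (\<lambda>t. coeff (signof p * (\<Prod>i = 0..<n. M t $$ (i, p i))) k)"
    proof (rule sm_coeff_mult)
      show "sm (\<lambda>t. coeff (signof p :: real poly) k')" for k' by (rule sm_const)
      show "sm (\<lambda>t. coeff (\<Prod>i = 0..<n. M t $$ (i, p i)) k')" for k'
        by (rule sm_coeff_prod) (use ent pi in auto)
    qed
  qed
qed

lemma sm_char_poly_coeff:
  fixes A :: "real \<Rightarrow> real mat"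
  assumes dim: "\<And>t. A t \<in> carrier_mat n n"
    and ent: "\<And>i j. i < n \<Longrightarrow> j < n \<Longrightarrow> sm (\<lambda>t. A t $$ (i, j))"
  shows "sm (\<lambda>t. coeff (char_poly (A t)) k)"
  unfolding char_poly_def
proof (rule sm_coeff_det)
  show "char_poly_matrix (A t) \<in> carrier_mat n n" for t using dim by simp
  fix i j k assume ij: "i < n" "j < n"
  have e: "coeff (char_poly_matrix (A t) $$ (i, j)) k
      = (if i = j then coeff [:0, 1:] k else 0) + (if k = 0 then - A t $$ (i, j) else 0)" for t
    using dim[of t] ij by (cases k) (auto simp: char_poly_matrix_def coeff_pCons split: nat.splits)
  show "sm (\<lambda>t. coeff (char_poly_matrix (A t) $$ (i, j)) k)"
  proof -
    have s1: "sm (\<lambda>t. if i = j then coeff [:0, 1:] k else 0)" by (rule sm_const)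
    have s2: "sm (\<lambda>t. if k = 0 then - A t $$ (i, j) else 0)"
      by (cases "k = 0") (simp_all add: sm_const sm_minus ent ij)
    show ?thesis unfolding e by (rule sm_add[OF s1 s2])
  qed
qed


definition HA :: "(nat \<Rightarrow> real) \<Rightarrow> (nat \<Rightarrow> real) \<Rightarrow> real" where
 "HA a b = (\<Sum>r<4. (1/2) * a (r mod 4) * a ((r+1) mod 4) + (1/2) * b (r mod 4) * b ((r+1) mod 4) + a (r mod 4) * b (r mod 4))"
definition HB :: "(nat \<Rightarrow> real) \<Rightarrow> (nat \<Rightarrow> real) \<Rightarrow> real" where
 "HB a b = (\<Sum>r<4. (1/4) * a (r mod 4) * a ((r+2) mod 4) + (1/4) * b (r mod 4) * b ((r+2) mod 4) + a (r mod 4) * b ((r+1) mod 4) + a (r mod 4) * b ((r+3) mod 4))"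

lemma Hpair_HA: "Hpair J1 J2 a b = - (J1 * HA a b + J2 * HB a b)"
  unfolding Hpair_def HA_def HB_def by (simp add: sum.distrib sum_distrib_left algebra_simps)

lemma sum4: "(\<Sum>r<(4::nat). f r) = f 0 + f 1 + f 2 + (f 3 :: real)"
proof -
  have e: "{..<4::nat} = {0,1,2,3}" by auto
  show ?thesis unfolding e by (simp add: add.assoc)
qed
lemma mods: "(0::nat) mod 4 = 0" "(1::nat) mod 4 = 1" "(2::nat) mod 4 = 2" "(3::nat) mod 4 = 3"
  "(0+1::nat) mod 4 = 1" "(1+1::nat) mod 4 = 2" "(2+1::nat) mod 4 = 3" "(3+1::nat) mod 4 = 0"
  "(0+2::nat) mod 4 = 2" "(1+2::nat) mod 4 = 3" "(2+2::nat) mod 4 = 0" "(3+2::nat) mod 4 = 1"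
  "(0+3::nat) mod 4 = 3" "(1+3::nat) mod 4 = 0" "(2+3::nat) mod 4 = 1" "(3+3::nat) mod 4 = 2"
  by simp_all
lemma HA_exp: "HA a b = (a 0 * a 1 + a 1 * a 2 + a 2 * a 3 + a 3 * a 0)/2 + (b 0 * b 1 + b 1 * b 2 + b 2 * b 3 + b 3 * b 0)/2 + a 0 * b 0 + a 1 * b 1 + a 2 * b 2 + a 3 * b 3"
  unfolding HA_def sum4 mods by (simp add: field_simps)

lemma HB_exp: "HB a b = (a 0 * a 2 + a 1 * a 3)/2 + (b 0 * b 2 + b 1 * b 3)/2 + a 0 * (b 1 + b 3) + a 1 * (b 2 + b 0) + a 2 * (b 3 + b 1) + a 3 * (b 0 + b 2)"
  unfolding HB_def sum4 mods by (simp add: field_simps)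

lemma Hpair_cong:
  assumes "\<And>i. i < 4 \<Longrightarrow> a i = a' i" "\<And>i. i < 4 \<Longrightarrow> b i = b' i"
  shows "Hpair J1 J2 a b = Hpair J1 J2 a' b'"
  unfolding Hpair_HA HA_exp HB_exp using assms by simp

definition spt :: "int list list" where
 "spt = [[1,1,1,1],[-1,1,1,1],[1,-1,1,1],[-1,-1,1,1],[1,1,-1,1],[-1,1,-1,1],[1,-1,-1,1],[-1,-1,-1,1],
         [1,1,1,-1],[-1,1,1,-1],[1,-1,1,-1],[-1,-1,1,-1],[1,1,-1,-1],[-1,1,-1,-1],[1,-1,-1,-1],[-1,-1,-1,-1]]"

definition sp :: "nat \<Rightarrow> nat \<Rightarrow> int" where
  "sp k i = 1 - 2 * int (((k - 1) div 2 ^ (i mod 4)) mod 2)"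

lemma state_sp: "state k i = of_int (sp k i)"
  unfolding state_def sp_def by simp

definition chk_sp :: bool where
  "chk_sp = list_all (\<lambda>k. list_all (\<lambda>i. spt ! (k - 1) ! i = sp k i) [0..<4]) [1..<17]"

lemma chk_sp: chk_sp by code_simp

lemma state_spt:
  assumes "k \<in> {1..16}" "i < 4"
  shows "state k i = of_int (spt ! (k - 1) ! i)"
proof -
  have "k \<in> set [1..<17]" "i \<in> set [0..<4]" using assms by auto
  then have "spt ! (k - 1) ! i = sp k i" using chk_sp unfolding chk_sp_def list_all_iff by blast
  then show ?thesis by (simp add: state_sp)
qed

definition hAl :: "int list \<Rightarrow> int list \<Rightarrow> int" where
 "hAl a b = (a!0 * a!1 + a!1 * a!2 + a!2 * a!3 + a!3 * a!0) + (b!0 * b!1 + b!1 * b!2 + b!2 * b!3 + b!3 * b!0) + 2 * (a!0 * b!0 + a!1 * b!1 + a!2 * b!2 + a!3 * b!3)"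
definition hBl :: "int list \<Rightarrow> int list \<Rightarrow> int" where
 "hBl a b = (a!0 * a!2 + a!1 * a!3) + (b!0 * b!2 + b!1 * b!3) + 2 * (a!0 * (b!1 + b!3) + a!1 * (b!2 + b!0) + a!2 * (b!3 + b!1) + a!3 * (b!0 + b!2))"

definition pr :: "nat \<Rightarrow> nat \<Rightarrow> int \<times> int" where
  "pr k l = (hAl (spt!(k-1)) (spt!(l-1)), hBl (spt!(k-1)) (spt!(l-1)))"

definition gth :: "real \<Rightarrow> real \<Rightarrow> real \<Rightarrow> real \<Rightarrow> int \<times> int \<Rightarrow> real" where
  "gth kB J1 J2 T p = exp ((J1 * of_int (fst p) / 2 + J2 * of_int (snd p) / 2) / (kB * T))"

lemma HA_of_int:
  assumes "\<And>i. i < 4 \<Longrightarrow> a i = of_int (sa ! i)" "\<And>i. i < 4 \<Longrightarrow> b i = of_int (sb ! i)"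
  shows "HA a b = of_int (hAl sa sb) / 2" "HB a b = of_int (hBl sa sb) / 2"
  unfolding HA_exp HB_exp hAl_def hBl_def using assms by (simp_all add: field_simps)

lemma theta_gth:
  assumes "k \<in> {1..16}" "l \<in> {1..16}"
  shows "theta kB J1 J2 T k l = gth kB J1 J2 T (pr k l)"
proof -
  have h1: "HA (state k) (state l) = of_int (fst (pr k l)) / 2" and h2: "HB (state k) (state l) = of_int (snd (pr k l)) / 2"
    unfolding pr_def using HA_of_int[of "state k" "spt!(k-1)" "state l" "spt!(l-1)"] state_spt assms by auto
  show ?thesis unfolding theta_def gth_def Hpair_HA h1 h2 by simp
qed

definition cnt_eq :: "('a) list \<Rightarrow> 'a list \<Rightarrow> bool" where
  "cnt_eq xs ys = list_all (\<lambda>p. count_list xs p = count_list ys p) (xs @ ys)"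

lemma cnt_eq_mset: "cnt_eq xs ys \<Longrightarrow> mset xs = mset ys"
  unfolding cnt_eq_def list_all_iff multiset_eq_iff
proof (intro allI)
  fix x assume h: "\<forall>p\<in>set (xs @ ys). count_list xs p = count_list ys p"
  show "count (mset xs) x = count (mset ys) x"
  proof (cases "x \<in> set (xs @ ys)")
    case True then show ?thesis using h by (simp add: count_mset)
  next
    case False then show ?thesis by (simp add: count_mset_0_iff[symmetric] del: count_mset_0_iff)
  qed
qed

definition chk_eqp :: "nat list \<Rightarrow> (nat \<Rightarrow> nat) \<Rightarrow> nat list list \<Rightarrow> nat list \<Rightarrow> bool" where
  "chk_eqp rws cl gl ks = list_all (\<lambda>k. list_all (\<lambda>g. cnt_eq (map (pr k) g) (map (pr (rws ! cl k)) g)) gl) ks"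

definition cls :: "nat \<Rightarrow> nat" where
 "cls k = (if k \<in> {1,16} then 0 else if k \<in> {2,3,5,8,9,12,14,15} then 1 else if k \<in> {4,7,10,13} then 2 else 3)"
definition Gl :: "nat list list" where "Gl = [[1,16], [2,3,5,8,9,12,14,15], [4,7,10,13], [6,11]]"

definition cls' :: "nat \<Rightarrow> nat" where
 "cls' k = (if k = 1 then 0 else if k \<in> {2,3,5,9} then 1 else 2)"
definition Gl' :: "nat list list" where "Gl' = [[1], [2,3,5,9], [6,11]]"

lemma chk_tau: "chk_eqp rows_tau cls Gl [1..<17]" by code_simp
lemma chk_tau': "chk_eqp rows_tau' cls' Gl' [1,2,3,5,6,9,11]" by code_simp


lemma less4: "j < (4::nat) \<Longrightarrow> j = 0 \<or> j = 1 \<or> j = 2 \<or> j = 3" by arith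
lemma less3: "j < (3::nat) \<Longrightarrow> j = 0 \<or> j = 1 \<or> j = 2" by arith

lemma groups_tau_set:
  assumes "j < 4"
  shows "groups_tau ! j = set (Gl ! j)" "distinct (Gl ! j)" "Gl ! j \<in> set Gl" "set (Gl ! j) \<subseteq> {1..16}"
  using less4[OF assms] by (auto simp: groups_tau_def Gl_def)

lemma groups_tau'_set:
  assumes "j < 3"
  shows "groups_tau' ! j = set (Gl' ! j)" "distinct (Gl' ! j)" "Gl' ! j \<in> set Gl'" "set (Gl' ! j) \<subseteq> {1,2,3,5,6,9,11}"
  using less3[OF assms] by (auto simp: groups_tau'_def Gl'_def)

lemma sum_theta_list:
  assumes "a \<in> {1..16}" "set xs \<subseteq> {1..16}" "distinct xs"
  shows "(\<Sum>l\<in>set xs. theta kB J1 J2 T a l) = sum_mset (image_mset (gth kB J1 J2 T) (mset (map (pr a) xs)))"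
proof -
  have "(\<Sum>l\<in>set xs. theta kB J1 J2 T a l) = sum_list (map (theta kB J1 J2 T a) xs)"
    by (rule sum.distinct_set_conv_list[OF assms(3)])
  also have "\<dots> = sum_list (map (gth kB J1 J2 T) (map (pr a) xs))"
    using assms(1,2) by (induction xs) (auto simp: theta_gth)
  also have "\<dots> = sum_mset (image_mset (gth kB J1 J2 T) (mset (map (pr a) xs)))"
    by (simp flip: sum_mset_sum_list mset_map)
  finally show ?thesis .
qed

lemma sum_theta_swap:
  assumes "a \<in> {1..16}" "b \<in> {1..16}" "set xs \<subseteq> {1..16}" "distinct xs" "cnt_eq (map (pr a) xs) (map (pr b) xs)"
  shows "(\<Sum>l\<in>set xs. theta kB J1 J2 T a l) = (\<Sum>l\<in>set xs. theta kB J1 J2 T b l)"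
  unfolding sum_theta_list[OF assms(1,3,4)] sum_theta_list[OF assms(2,3,4)] cnt_eq_mset[OF assms(5)] ..

lemma cls_lt: "cls k < 4" by (simp add: cls_def)
lemma cls'_lt: "cls' k < 3" by (simp add: cls'_def)

lemma rows_tau_in: "i < 4 \<Longrightarrow> rows_tau ! i \<in> {1..16}"
  by (drule less4) (auto simp: rows_tau_def)
lemma rows_tau'_in: "i < 3 \<Longrightarrow> rows_tau' ! i \<in> {1..16}"
  by (drule less3) (auto simp: rows_tau'_def)

lemma tau_entry: "i < 4 \<Longrightarrow> j < 4 \<Longrightarrow> tau kB J1 J2 T $$ (i, j) = (\<Sum>l\<in>groups_tau ! j. theta kB J1 J2 T (rows_tau ! i) l)"
  by (simp add: tau_def)
lemma tau'_entry: "i < 3 \<Longrightarrow> j < 3 \<Longrightarrow> tau' kB J1 J2 T $$ (i, j) = (\<Sum>l\<in>groups_tau' ! j. theta kB J1 J2 T (rows_tau' ! i) l)"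
  by (simp add: tau'_def)

lemma tau_carrier: "tau kB J1 J2 T \<in> carrier_mat 4 4" by (simp add: tau_def)
lemma tau'_carrier: "tau' kB J1 J2 T \<in> carrier_mat 3 3" by (simp add: tau'_def)

lemma group_sum_tau:
  assumes k: "k \<in> {1..16}" and j: "j < 4"
  shows "(\<Sum>l\<in>groups_tau ! j. theta kB J1 J2 T k l) = tau kB J1 J2 T $$ (cls k, j)"
proof -
  have c: "cnt_eq (map (pr k) (Gl ! j)) (map (pr (rows_tau ! cls k)) (Gl ! j))"
  proof -
    have "k \<in> set [1..<17]" using k by auto
    then show ?thesis using chk_tau groups_tau_set(3)[OF j] unfolding chk_eqp_def list_all_iff by blast
  qed
  show ?thesis
    unfolding tau_entry[OF cls_lt j] groups_tau_set(1)[OF j]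
    by (rule sum_theta_swap[OF k rows_tau_in[OF cls_lt] groups_tau_set(4,2)[OF j] c])
qed

lemma group_sum_tau':
  assumes k: "k \<in> {1,2,3,5,6,9,11}" and j: "j < 3"
  shows "(\<Sum>l\<in>groups_tau' ! j. theta kB J1 J2 T k l) = tau' kB J1 J2 T $$ (cls' k, j)"
proof -
  have c: "cnt_eq (map (pr k) (Gl' ! j)) (map (pr (rows_tau' ! cls' k)) (Gl' ! j))"
  proof -
    have "k \<in> set [1,2,3,5,6,9,11]" using k by auto
    then show ?thesis using chk_tau' groups_tau'_set(3)[OF j] unfolding chk_eqp_def list_all_iff by blast
  qed
  have k16: "k \<in> {1..16}" using k by auto
  have sub: "set (Gl' ! j) \<subseteq> {1..16}" using groups_tau'_set(4)[OF j] by auto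
  show ?thesis
    unfolding tau'_entry[OF cls'_lt j] groups_tau'_set(1)[OF j]
    by (rule sum_theta_swap[OF k16 rows_tau'_in[OF cls'_lt] sub groups_tau'_set(2)[OF j] c])
qed

lemma partition16:
  fixes f :: "nat \<Rightarrow> real"
  shows "(\<Sum>l\<in>{1..16}. f l) = (\<Sum>j<4. \<Sum>l\<in>groups_tau ! j. f l)"
proof -
  have e: "{1..16::nat} = {1,2,3,4,5,6,7,8,9,10,11,12,13,14,15,16}" by (auto; presburger)
  show ?thesis unfolding e sum4 by (simp add: groups_tau_def ac_simps)
qed

lemma partition7:
  fixes f :: "nat \<Rightarrow> real"
  shows "(\<Sum>l\<in>{1,2,3,5,6,9,11}. f l) = (\<Sum>j<3. \<Sum>l\<in>groups_tau' ! j. f l)"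
proof -
  have e: "{..<3::nat} = {0,1,2}" by auto
  show ?thesis unfolding e by (simp add: groups_tau'_def ac_simps)
qed

lemma cls_group: "j < 4 \<Longrightarrow> l \<in> groups_tau ! j \<Longrightarrow> cls l = j"
  by (drule less4) (auto simp: groups_tau_def cls_def)
lemma cls'_group: "j < 3 \<Longrightarrow> l \<in> groups_tau' ! j \<Longrightarrow> cls' l = j"
  by (drule less3) (auto simp: groups_tau'_def cls'_def)

lemma eig16:
  assumes k: "k \<in> {1..16}"
    and eig: "\<And>i. i < 4 \<Longrightarrow> (\<Sum>j<4. tau kB J1 J2 T $$ (i, j) * w j) = r * w i"
  shows "(\<Sum>l\<in>{1..16}. theta kB J1 J2 T k l * w (cls l)) = r * w (cls k)"
proof -
  have "(\<Sum>l\<in>{1..16}. theta kB J1 J2 T k l * w (cls l)) = (\<Sum>j<4. \<Sum>l\<in>groups_tau ! j. theta kB J1 J2 T k l * w (cls l))"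
    by (rule partition16)
  also have "\<dots> = (\<Sum>j<4. \<Sum>l\<in>groups_tau ! j. theta kB J1 J2 T k l * w j)"
    by (intro sum.cong refl) (simp add: cls_group)
  also have "\<dots> = (\<Sum>j<4. tau kB J1 J2 T $$ (cls k, j) * w j)"
    by (intro sum.cong refl) (simp add: group_sum_tau[OF k] flip: sum_distrib_right)
  also have "\<dots> = r * w (cls k)" by (rule eig[OF cls_lt])
  finally show ?thesis .
qed

lemma eig7:
  assumes k: "k \<in> {1,2,3,5,6,9,11}"
    and eig: "\<And>i. i < 3 \<Longrightarrow> (\<Sum>j<3. tau' kB J1 J2 T $$ (i, j) * w j) = r * w i"
  shows "(\<Sum>l\<in>{1,2,3,5,6,9,11}. theta kB J1 J2 T k l * w (cls' l)) = r * w (cls' k)"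
proof -
  have "(\<Sum>l\<in>{1,2,3,5,6,9,11}. theta kB J1 J2 T k l * w (cls' l)) = (\<Sum>j<3. \<Sum>l\<in>groups_tau' ! j. theta kB J1 J2 T k l * w (cls' l))"
    by (rule partition7)
  also have "\<dots> = (\<Sum>j<3. \<Sum>l\<in>groups_tau' ! j. theta kB J1 J2 T k l * w j)"
    by (intro sum.cong refl) (simp add: cls'_group)
  also have "\<dots> = (\<Sum>j<3. tau' kB J1 J2 T $$ (cls' k, j) * w j)"
    by (intro sum.cong refl) (simp add: group_sum_tau'[OF k] flip: sum_distrib_right)
  also have "\<dots> = r * w (cls' k)" by (rule eig[OF cls'_lt])
  finally show ?thesis .
qed


definition Lset :: "(nat \<Rightarrow> real) set" where "Lset = {..<4::nat} \<rightarrow>\<^sub>E {-1, 1::real}"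
definition st :: "nat \<Rightarrow> nat \<Rightarrow> real" where "st k = restrict (state k) {..<4}"
definition Lnp :: "(nat \<Rightarrow> real) set" where
  "Lnp = {a \<in> Lset. \<forall>r<4. \<not> (a r = -1 \<and> a ((r+1) mod 4) = -1)}"
definition Wt :: "real \<Rightarrow> real \<Rightarrow> real \<Rightarrow> real \<Rightarrow> (nat \<Rightarrow> real) \<Rightarrow> (nat \<Rightarrow> real) \<Rightarrow> real" where
  "Wt kB J1 J2 T a b = exp (- Hpair J1 J2 a b / (kB * T))"

lemma state_pm: "state k i = -1 \<or> state k i = 1"
proof -
  have "((k - 1) div 2 ^ (i mod 4)) mod 2 = 0 \<or> ((k - 1) div 2 ^ (i mod 4)) mod 2 = 1" by arith
  then show ?thesis unfolding state_def by auto
qed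

lemma st_in: "st k \<in> Lset"
  unfolding st_def Lset_def using state_pm by auto

definition chk_inj :: bool where
  "chk_inj = list_all (\<lambda>k. list_all (\<lambda>l. list_all (\<lambda>i. spt!(k-1)!i = spt!(l-1)!i) [0..<4] \<longrightarrow> k = l) [1..<17]) [1..<17]"
lemma chk_inj: chk_inj by code_simp

lemma st_inj: "inj_on st {1..16}"
proof (rule inj_onI)
  fix k l assume k: "k \<in> {1..16}" and l: "l \<in> {1..16}" and e: "st k = st l"
  have "\<forall>i\<in>set [0..<4]. spt!(k-1)!i = spt!(l-1)!i"
  proof
    fix i assume "i \<in> set [0..<4::nat]"
    then have i: "i < 4" by simp
    have "st k i = st l i" using e by simp
    then have "state k i = state l i" using i by (simp add: st_def)
    then show "spt!(k-1)!i = spt!(l-1)!i" using state_spt[OF k i] state_spt[OF l i] by simp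
  qed
  moreover have "k \<in> set [1..<17]" "l \<in> set [1..<17]" using k l by auto
  ultimately show "k = l" using chk_inj unfolding chk_inj_def list_all_iff by blast
qed

lemma card_Lset: "card Lset = 16"
proof -
  have c2: "card {-1, 1::real} = 2" by simp
  have "card Lset = (\<Prod>i<4::nat. card {-1, 1::real})" unfolding Lset_def by (simp only: card_PiE finite_lessThan)
  also have "\<dots> = 16" unfolding c2 by simp
  finally show ?thesis .
qed

lemma st_image: "st ` {1..16} = Lset"
proof (rule card_subset_eq)
  show "finite Lset" unfolding Lset_def by (simp add: finite_PiE)
  show "st ` {1..16} \<subseteq> Lset" using st_in by auto
  show "card (st ` {1..16}) = card Lset" using card_image[OF st_inj] card_Lset by simp
qed

definition npl :: "int list \<Rightarrow> bool" where
  "npl s = list_all (\<lambda>r. \<not> (s!r = -1 \<and> s!((r+1) mod 4) = -1)) [0..<4]"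
definition chk_np :: bool where
  "chk_np = list_all (\<lambda>k. npl (spt!(k-1)) = (k \<in> set [1,2,3,5,6,9,11])) [1..<17]"
lemma chk_np: chk_np by code_simp

lemma rofint_m1: "(real_of_int x = - 1) \<longleftrightarrow> (x = - 1)"
  by (metis of_int_eq_iff of_int_minus of_int_1)

lemma st_Lnp_iff:
  assumes k: "k \<in> {1..16}"
  shows "st k \<in> Lnp \<longleftrightarrow> k \<in> {1,2,3,5,6,9,11}"
proof -
  have "st k \<in> Lnp \<longleftrightarrow> npl (spt!(k-1))"
    unfolding Lnp_def npl_def list_all_iff using st_in
    by (auto simp: st_def state_spt[OF k] rofint_m1)
  also have "\<dots> \<longleftrightarrow> k \<in> {1,2,3,5,6,9,11}"
  proof -
    have "k \<in> set [1..<17]" using k by auto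
    then show ?thesis using chk_np unfolding chk_np_def list_all_iff by auto
  qed
  finally show ?thesis .
qed

lemma st_image_np: "st ` {1,2,3,5,6,9,11} = Lnp"
proof -
  have "Lnp = {a \<in> st ` {1..16}. a \<in> Lnp}" using st_image unfolding Lnp_def by auto
  also have "\<dots> = st ` {k \<in> {1..16}. st k \<in> Lnp}" by auto
  also have "{k \<in> {1..16}. st k \<in> Lnp} = {1,2,3,5,6,9,11}" using st_Lnp_iff by auto
  finally show ?thesis by simp
qed

lemma Wt_st: "Wt kB J1 J2 T (st k) (st l) = theta kB J1 J2 T k l"
proof -
  have "Hpair J1 J2 (st k) (st l) = Hpair J1 J2 (state k) (state l)"
    by (rule Hpair_cong) (simp_all add: st_def)
  then show ?thesis by (simp add: Wt_def theta_def)
qed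

lemma exp_Htot:
  assumes \<sigma>: "\<sigma> \<in> configs M"
  shows "exp (- Htot J1 J2 M \<sigma> / (kB * T)) = (\<Prod>m<M. Wt kB J1 J2 T (\<sigma> m) (\<sigma> (Suc m mod M)))"
proof -
  have h: "Hpair J1 J2 (layer M \<sigma> m) (layer M \<sigma> (m + 1)) = Hpair J1 J2 (\<sigma> m) (\<sigma> (Suc m mod M))"
    if m: "m < M" for m
    by (rule Hpair_cong) (use m in \<open>simp_all add: layer_def\<close>)
  have ht: "Htot J1 J2 M \<sigma> = (\<Sum>m<M. Hpair J1 J2 (\<sigma> m) (\<sigma> (Suc m mod M)))"
    unfolding Htot_def
  proof (rule sum.cong[OF refl])
    fix m assume "m \<in> {..<M}"
    then show "Hpair J1 J2 (layer M \<sigma> m) (layer M \<sigma> (m + 1)) = Hpair J1 J2 (\<sigma> m) (\<sigma> (Suc m mod M))"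
      by (intro h) simp
  qed
  have "- Htot J1 J2 M \<sigma> / (kB * T) = (\<Sum>m<M. - Hpair J1 J2 (\<sigma> m) (\<sigma> (Suc m mod M)) / (kB * T))"
    unfolding ht by (simp add: sum_negf sum_divide_distrib)
  then show ?thesis by (simp add: exp_sum Wt_def)
qed

lemma Zpart_Zc: "Zpart kB J1 J2 M T = Zc Lset (Wt kB J1 J2 T) M"
  unfolding Zpart_def Zc_def
proof (rule sum.cong)
  show "configs M = Pi\<^sub>E {..<M} (\<lambda>_. Lset)" by (simp add: configs_def Lset_def)
  fix \<sigma> assume "\<sigma> \<in> Pi\<^sub>E {..<M} (\<lambda>_. Lset)"
  then have "\<sigma> \<in> configs M" by (simp add: configs_def Lset_def)
  then show "exp (- Htot J1 J2 M \<sigma> / (kB * T)) = (\<Prod>m<M. Wt kB J1 J2 T (\<sigma> m) (\<sigma> (Suc m mod M)))"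
    by (rule exp_Htot)
qed

lemma nonperc_set: "{\<sigma> \<in> configs M. nonperc M \<sigma>} = Pi\<^sub>E {..<M} (\<lambda>_. Lnp)" (is "?A = ?B")
proof (rule equalityI; rule subsetI)
  fix \<sigma> assume "\<sigma> \<in> {\<sigma> \<in> configs M. nonperc M \<sigma>}"
  then have c: "\<sigma> \<in> Pi\<^sub>E {..<M} (\<lambda>_. Lset)" and np: "nonperc M \<sigma>" by (auto simp: configs_def Lset_def)
  have "\<sigma> m \<in> Lnp" if m: "m < M" for m
  proof -
    have "\<sigma> m \<in> Lset" using c m by auto
    moreover have "\<forall>r<4. \<not> (\<sigma> m r = -1 \<and> \<sigma> m ((r+1) mod 4) = -1)"
      using np m unfolding nonperc_def layer_def by auto
    ultimately show ?thesis unfolding Lnp_def by auto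
  qed
  then show "\<sigma> \<in> Pi\<^sub>E {..<M} (\<lambda>_. Lnp)" using c by auto
next
  fix \<sigma> assume s: "\<sigma> \<in> Pi\<^sub>E {..<M} (\<lambda>_. Lnp)"
  then have "\<sigma> \<in> configs M" unfolding configs_def Lnp_def Lset_def by auto
  moreover have "nonperc M \<sigma>"
    unfolding nonperc_def layer_def using s unfolding Lnp_def by auto
  ultimately show "\<sigma> \<in> {\<sigma> \<in> configs M. nonperc M \<sigma>}" by simp
qed

lemma Zpart'_Zc: "Zpart' kB J1 J2 M T = Zc Lnp (Wt kB J1 J2 T) M"
  unfolding Zpart'_def Zc_def nonperc_set
proof (rule sum.cong[OF refl])
  fix \<sigma> assume "\<sigma> \<in> Pi\<^sub>E {..<M} (\<lambda>_. Lnp)"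
  then have "\<sigma> \<in> configs M" unfolding configs_def Lnp_def Lset_def by auto
  then show "exp (- Htot J1 J2 M \<sigma> / (kB * T)) = (\<Prod>m<M. Wt kB J1 J2 T (\<sigma> m) (\<sigma> (Suc m mod M)))"
    by (rule exp_Htot)
qed

lemma transfer_lim:
  assumes K: "finite K" "K \<noteq> {}" "inj_on st K"
    and vpos: "\<And>k. k \<in> K \<Longrightarrow> w (cl k) > 0"
    and eig: "\<And>k. k \<in> K \<Longrightarrow> (\<Sum>l\<in>K. theta kB J1 J2 T k l * w (cl l)) = r * w (cl k)"
    and r: "r > 0"
  shows "(\<lambda>M. ln (Zc (st ` K) (Wt kB J1 J2 T) M) / real M) \<longlonglongrightarrow> ln r"
proof -
  define v where "v = (\<lambda>a. w (cl (inv_into K st a)))"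
  show ?thesis
  proof (rule Zc_limit[where v=v])
  show "finite (st ` K)" "st ` K \<noteq> {}" using K by auto
  show "Wt kB J1 J2 T a b > 0" for a b by (simp add: Wt_def)
  show "r > 0" by fact
  show "v a > 0" if "a \<in> st ` K" for a
    using that vpos inv_into_into[of a st K] unfolding v_def by blast
  show "(\<Sum>b\<in>st ` K. Wt kB J1 J2 T a b * v b) = r * v a" if a: "a \<in> st ` K" for a
  proof -
    obtain k where k: "k \<in> K" "a = st k" using a by auto
    have "(\<Sum>b\<in>st ` K. Wt kB J1 J2 T a b * v b) = (\<Sum>l\<in>K. Wt kB J1 J2 T a (st l) * v (st l))"
      by (rule sum.reindex[OF K(3), unfolded comp_def])
    also have "\<dots> = (\<Sum>l\<in>K. theta kB J1 J2 T k l * w (cl l))"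
      by (rule sum.cong) (use K(3) k in \<open>simp_all add: v_def Wt_st\<close>)
    also have "\<dots> = r * v a" using eig[OF k(1)] K(3) k by (simp add: v_def)
    finally show ?thesis .
  qed
  qed
qed


lemma theta_pos: "theta kB J1 J2 T k l > 0" by (simp add: theta_def)

lemma tau_pos: "i < 4 \<Longrightarrow> j < 4 \<Longrightarrow> tau kB J1 J2 T $$ (i, j) > 0"
  unfolding tau_entry
  by (intro sum_pos) (auto simp: theta_pos groups_tau_set dest!: less4[of j], auto simp: Gl_def)

lemma tau'_pos: "i < 3 \<Longrightarrow> j < 3 \<Longrightarrow> tau' kB J1 J2 T $$ (i, j) > 0"
  unfolding tau'_entry
  by (intro sum_pos) (auto simp: theta_pos groups_tau'_set dest!: less3[of j], auto simp: Gl'_def)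

lemma tau_perron:
  obtains w where "\<And>i. i < 4 \<Longrightarrow> w i > 0"
    "\<And>i. i < 4 \<Longrightarrow> (\<Sum>j<4. tau kB J1 J2 T $$ (i, j) * w j) = lam_max kB J1 J2 T * w i"
    "lam_max kB J1 J2 T > 0"
proof -
  obtain r w where r: "r > 0" and w: "\<forall>i<4. w i > 0" "\<forall>i<4. (\<Sum>j<4. tau kB J1 J2 T $$ (i, j) * w j) = r * w i"
    using perron_nat[where 'n = 4 and n = 4 and A = "\<lambda>i j. tau kB J1 J2 T $$ (i, j)"] tau_pos by auto
  have "max_real_root (tau kB J1 J2 T) = r"
    by (rule max_root_perron[OF tau_carrier, where w = w]) (use w tau_pos in \<open>auto intro: less_imp_le\<close>)
  then have "lam_max kB J1 J2 T = r" by (simp add: lam_max_def)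
  then show ?thesis using that r w by auto
qed

lemma tau'_perron:
  obtains w where "\<And>i. i < 3 \<Longrightarrow> w i > 0"
    "\<And>i. i < 3 \<Longrightarrow> (\<Sum>j<3. tau' kB J1 J2 T $$ (i, j) * w j) = mu_max kB J1 J2 T * w i"
    "mu_max kB J1 J2 T > 0"
proof -
  obtain r w where r: "r > 0" and w: "\<forall>i<3. w i > 0" "\<forall>i<3. (\<Sum>j<3. tau' kB J1 J2 T $$ (i, j) * w j) = r * w i"
    using perron_nat[where 'n = 3 and n = 3 and A = "\<lambda>i j. tau' kB J1 J2 T $$ (i, j)"] tau'_pos by auto
  have "max_real_root (tau' kB J1 J2 T) = r"
    by (rule max_root_perron[OF tau'_carrier, where w = w]) (use w tau'_pos in \<open>auto intro: less_imp_le\<close>)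
  then have "mu_max kB J1 J2 T = r" by (simp add: mu_max_def)
  then show ?thesis using that r w by auto
qed

lemma lim_Z: "(\<lambda>M. ln (Zpart kB J1 J2 M T) / real M) \<longlonglongrightarrow> ln (lam_max kB J1 J2 T)"
proof -
  obtain w where w: "\<And>i. i < 4 \<Longrightarrow> w i > 0"
    "\<And>i. i < 4 \<Longrightarrow> (\<Sum>j<4. tau kB J1 J2 T $$ (i, j) * w j) = lam_max kB J1 J2 T * w i"
    "lam_max kB J1 J2 T > 0" by (rule tau_perron[of kB J1 J2 T]) auto
  have "(\<lambda>M. ln (Zc (st ` {1..16}) (Wt kB J1 J2 T) M) / real M) \<longlonglongrightarrow> ln (lam_max kB J1 J2 T)"
    by (rule transfer_lim[where cl = cls and w = w]) (use w st_inj cls_lt eig16 in auto)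
  then show ?thesis unfolding st_image Zpart_Zc .
qed

lemma lim_Z': "(\<lambda>M. ln (Zpart' kB J1 J2 M T) / real M) \<longlonglongrightarrow> ln (mu_max kB J1 J2 T)"
proof -
  obtain w where w: "\<And>i. i < 3 \<Longrightarrow> w i > 0"
    "\<And>i. i < 3 \<Longrightarrow> (\<Sum>j<3. tau' kB J1 J2 T $$ (i, j) * w j) = mu_max kB J1 J2 T * w i"
    "mu_max kB J1 J2 T > 0" by (rule tau'_perron[of kB J1 J2 T]) auto
  have inj: "inj_on st {1,2,3,5,6,9,11}" by (rule inj_on_subset[OF st_inj]) auto
  have "(\<lambda>M. ln (Zc (st ` {1,2,3,5,6,9,11}) (Wt kB J1 J2 T) M) / real M) \<longlonglongrightarrow> ln (mu_max kB J1 J2 T)"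
    by (rule transfer_lim[where cl = cls' and w = w]) (use w inj cls'_lt eig7 in auto)
  then show ?thesis unfolding st_image_np Zpart'_Zc .
qed

lemma Zc_pos:
  assumes "finite S" "S \<noteq> {}" "\<And>a b. W a b > 0"
  shows "Zc S W M > 0"
  unfolding Zc_def using assms
  by (intro sum_pos) (auto simp: finite_PiE PiE_eq_empty_iff intro!: prod_pos)

lemma Zpart_pos: "Zpart kB J1 J2 M T > 0"
  unfolding Zpart_Zc by (rule Zc_pos) (use st_image in \<open>auto simp: Wt_def Lset_def finite_PiE\<close>)

lemma Zpart'_pos: "Zpart' kB J1 J2 M T > 0"
proof -
  have "finite Lnp" "Lnp \<noteq> {}" unfolding st_image_np[symmetric] by auto
  then show ?thesis unfolding Zpart'_Zc by (intro Zc_pos) (auto simp: Wt_def)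
qed


lemma theta_sm: "sm (\<lambda>t. theta kB J1 J2 t k l)"
proof -
  have "(\<lambda>t. theta kB J1 J2 t k l) = (\<lambda>t. exp ((- Hpair J1 J2 (state k) (state l) / kB) * inverse t))"
    by (rule ext) (simp add: theta_def divide_inverse inverse_mult_distrib mult.assoc)
  then show ?thesis using sm_exp_inv[of "- Hpair J1 J2 (state k) (state l) / kB"] by (simp only:)
qed

lemma tau_sm: "i < 4 \<Longrightarrow> j < 4 \<Longrightarrow> sm (\<lambda>t. tau kB J1 J2 t $$ (i, j))"
proof -
  assume ij: "i < 4" "j < 4"
  have e: "(\<lambda>t. tau kB J1 J2 t $$ (i, j)) = (\<lambda>t. \<Sum>l\<in>groups_tau ! j. theta kB J1 J2 t (rows_tau ! i) l)"
    using ij by (simp add: tau_entry)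
  have "sm (\<lambda>t. \<Sum>l\<in>groups_tau ! j. theta kB J1 J2 t (rows_tau ! i) l)"
    by (rule sm_sum) (auto simp: groups_tau_set(1)[OF ij(2)] theta_sm)
  then show ?thesis unfolding e .
qed

lemma coeff_sm: "sm (\<lambda>t. coeff (char_poly (tau kB J1 J2 t)) k)"
  by (rule sm_char_poly_coeff[where n = 4]) (auto simp: tau_carrier tau_sm)

lemma lam_cont:
  assumes t0: "t0 > 0"
  shows "isCont (\<lambda>t. lam_max kB J1 J2 t) t0"
proof -
  define A where "A = (\<lambda>t. tau kB J1 J2 t)"
  define x where "x = lam_max kB J1 J2 t0"
  obtain w0 where w0: "\<And>i. i < 4 \<Longrightarrow> w0 i > 0"
    "\<And>i. i < 4 \<Longrightarrow> (\<Sum>j<4. A t0 $$ (i, j) * w0 j) = x * w0 i"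
    using tau_perron[of kB J1 J2 t0] unfolding A_def x_def by metis
  define f where "f = (\<lambda>i t. (\<Sum>j<4. A t $$ (i, j) * w0 j) / w0 i)"
  have flim: "(f i \<longlongrightarrow> x) (at t0)" if i: "i < 4" for i
  proof -
    have ent: "((\<lambda>t. A t $$ (i, j)) \<longlongrightarrow> A t0 $$ (i, j)) (at t0)" if j: "j \<in> {..<4}" for j
    proof -
      have "(\<lambda>t. A t $$ (i, j)) differentiable (at t0)"
        unfolding A_def by (rule sm_D[OF tau_sm[OF i] t0]) (use j in auto)
      then have "isCont (\<lambda>t. A t $$ (i, j)) t0" by (rule differentiable_imp_continuous_within)
      then show ?thesis by (simp add: isCont_def)
    qed
    have "(f i \<longlongrightarrow> (\<Sum>j<4. A t0 $$ (i, j) * w0 j) / w0 i) (at t0)"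
      unfolding f_def by (intro tendsto_intros ent) (use w0(1)[OF i] in auto)
    then show ?thesis using w0[OF i] by simp
  qed
  have ev: "eventually (\<lambda>t. \<forall>i\<in>{..<4}. P (f i t)) (at t0)"
    if "\<And>i. i < 4 \<Longrightarrow> eventually (\<lambda>t. P (f i t)) (at t0)" for P
    by (rule eventually_ball_finite) (use that in auto)
  have Ann: "A t $$ (i, j) \<ge> 0" if "i < 4" "j < 4" for t i j
    using tau_pos[OF that] unfolding A_def by (simp add: less_imp_le)
  show ?thesis unfolding isCont_def
  proof (subst order_tendsto_iff, intro conjI allI impI)
    fix l assume l: "l < lam_max kB J1 J2 t0"
    define l' where "l' = (l + x) / 2"
    have l'': "l < l'" "l' < x" using l unfolding l'_def x_def by auto
    have "eventually (\<lambda>t. \<forall>i\<in>{..<4}. l' < f i t) (at t0)"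
      by (rule ev) (rule order_tendstoD(1)[OF flim l''(2)])
    then show "eventually (\<lambda>t. l < lam_max kB J1 J2 t) (at t0)"
    proof eventually_elim
      case (elim t)
      obtain u where u: "\<And>i. i < 4 \<Longrightarrow> u i > 0"
        "\<And>i. i < 4 \<Longrightarrow> (\<Sum>j<4. A t $$ (i, j) * u j) = lam_max kB J1 J2 t * u i"
        using tau_perron[of kB J1 J2 t] unfolding A_def by metis
      have "l' \<le> lam_max kB J1 J2 t"
      proof (rule eig_lower[where B = "\<lambda>i j. A t $$ (i, j)" and n = 4 and w = w0 and u = u])
        fix i :: nat assume i: "i < 4"
        have "l' < f i t" using elim i by auto
        then show "l' * w0 i \<le> (\<Sum>j<4. A t $$ (i, j) * w0 j)"
          using w0(1)[OF i] unfolding f_def by (simp add: less_divide_eq less_imp_le)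
      qed (use Ann w0 u in auto)
      then show ?case using l'' by simp
    qed
  next
    fix h assume h: "lam_max kB J1 J2 t0 < h"
    define h' where "h' = (h + x) / 2"
    have h'': "h' < h" "x < h'" using h unfolding h'_def x_def by auto
    have "eventually (\<lambda>t. \<forall>i\<in>{..<4}. f i t < h') (at t0)"
      by (rule ev) (rule order_tendstoD(2)[OF flim h''(2)])
    then show "eventually (\<lambda>t. lam_max kB J1 J2 t < h) (at t0)"
    proof eventually_elim
      case (elim t)
      obtain u where u: "\<And>i. i < 4 \<Longrightarrow> u i > 0"
        "\<And>i. i < 4 \<Longrightarrow> (\<Sum>j<4. A t $$ (i, j) * u j) = lam_max kB J1 J2 t * u i"
        using tau_perron[of kB J1 J2 t] unfolding A_def by metis
      have "\<bar>lam_max kB J1 J2 t\<bar> \<le> h'"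
      proof (rule eig_bound[where B = "\<lambda>i j. A t $$ (i, j)" and n = 4 and w = w0 and u = u])
        fix i :: nat assume i: "i < 4"
        have "f i t < h'" using elim i by auto
        then show "(\<Sum>j<4. A t $$ (i, j) * w0 j) \<le> h' * w0 i"
          using w0(1)[OF i] unfolding f_def by (simp add: divide_less_eq less_imp_le)
      next
        have "u 0 \<noteq> 0" using u(1)[of 0] by simp
        then show "\<exists>i<4. u i \<noteq> 0" by (intro exI[of _ 0]) simp
      qed (use Ann w0 u in auto)
      then show ?case using h'' by simp
    qed
  qed
qed


lemma lam_root: "poly (char_poly (tau kB J1 J2 t)) (lam_max kB J1 J2 t) = 0"
proof -
  define A where "A = tau kB J1 J2 t"
  define r where "r = lam_max kB J1 J2 t"
  obtain w where w: "\<And>i. i < 4 \<Longrightarrow> w i > 0"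
    "\<And>i. i < 4 \<Longrightarrow> (\<Sum>j<4. A $$ (i, j) * w j) = r * w i"
    using tau_perron[of kB J1 J2 t] unfolding A_def r_def by metis
  have A: "A \<in> carrier_mat 4 4" unfolding A_def by (rule tau_carrier)
  have "eigenvalue A r"
    unfolding eigenvalue_def eigenvector_def
  proof (intro exI conjI)
    show "vec 4 w \<in> carrier_vec (dim_row A)" using A by simp
    show "vec 4 w \<noteq> 0\<^sub>v (dim_row A)"
    proof
      assume "vec 4 w = 0\<^sub>v (dim_row A)"
      then have "vec 4 w $ 0 = 0" using A by simp
      then show False using w(1)[of 0] by simp
    qed
    show "A *\<^sub>v vec 4 w = r \<cdot>\<^sub>v vec 4 w"
    proof (rule eq_vecI)
      fix i assume "i < dim_vec (r \<cdot>\<^sub>v vec 4 w)"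
      then have i: "i < 4" by simp
      show "(A *\<^sub>v vec 4 w) $ i = (r \<cdot>\<^sub>v vec 4 w) $ i"
        using mat_vec_sum[OF A i, of w] w(2)[OF i] i by simp
    qed (use A in simp)
  qed
  then show ?thesis using eigenvalue_root_char_poly[OF A] unfolding A_def r_def by simp
qed

definition dcoef :: "real \<Rightarrow> real \<Rightarrow> real \<Rightarrow> nat \<Rightarrow> real \<Rightarrow> real" where
  "dcoef kB J1 J2 k = (SOME g. \<forall>t>0. ((\<lambda>s. coeff (char_poly (tau kB J1 J2 s)) k) has_real_derivative g t) (at t) \<and> g differentiable (at t))"

lemma dcoef:
  assumes "t > 0"
  shows "((\<lambda>s. coeff (char_poly (tau kB J1 J2 s)) k) has_real_derivative dcoef kB J1 J2 k t) (at t)"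
    "dcoef kB J1 J2 k differentiable (at t)"
proof -
  have "\<exists>g. \<forall>t>0. ((\<lambda>s. coeff (char_poly (tau kB J1 J2 s)) k) has_real_derivative g t) (at t) \<and> g differentiable (at t)"
    using coeff_sm[of kB J1 J2 k] unfolding sm_def .
  from someI_ex[OF this] assms show
    "((\<lambda>s. coeff (char_poly (tau kB J1 J2 s)) k) has_real_derivative dcoef kB J1 J2 k t) (at t)"
    "dcoef kB J1 J2 k differentiable (at t)" unfolding dcoef_def by blast+
qed

definition Qd :: "real \<Rightarrow> real \<Rightarrow> real \<Rightarrow> real \<Rightarrow> real" where
  "Qd kB J1 J2 t = poly (pderiv (char_poly (tau kB J1 J2 t))) (lam_max kB J1 J2 t)"

lemma Qd_pos: "Qd kB J1 J2 t > 0"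
proof -
  obtain w where w: "\<And>i. i < 4 \<Longrightarrow> w i > 0"
    "\<And>i. i < 4 \<Longrightarrow> (\<Sum>j<4. tau kB J1 J2 t $$ (i, j) * w j) = lam_max kB J1 J2 t * w i"
    using tau_perron[of kB J1 J2 t] by metis
  show ?thesis unfolding Qd_def
    by (rule pderiv_char_poly_pos[OF tau_carrier, where w = w]) (use w tau_pos in auto)
qed

lemma Qd_sum: "Qd kB J1 J2 t = (\<Sum>k\<le>4. of_nat (Suc k) * coeff (char_poly (tau kB J1 J2 t)) (Suc k) * lam_max kB J1 J2 t ^ k)"
proof -
  have "degree (pderiv (char_poly (tau kB J1 J2 t))) \<le> 4"
    using degree_monic_char_poly[OF tau_carrier] by (simp add: degree_pderiv)
  then show ?thesis unfolding Qd_def by (simp add: poly_sum_N[of _ 4] coeff_pderiv)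
qed

definition Dl :: "real \<Rightarrow> real \<Rightarrow> real \<Rightarrow> real \<Rightarrow> real" where
  "Dl kB J1 J2 t = - (\<Sum>k\<le>4. dcoef kB J1 J2 k t * lam_max kB J1 J2 t ^ k) / Qd kB J1 J2 t"

lemma lam_DERIV:
  assumes t: "t > 0"
  shows "((\<lambda>s. lam_max kB J1 J2 s) has_real_derivative Dl kB J1 J2 t) (at t)"
proof -
  have "((\<lambda>s. lam_max kB J1 J2 s) has_real_derivative
      (- (\<Sum>k\<le>4. dcoef kB J1 J2 k t * lam_max kB J1 J2 t ^ k) / poly (pderiv (char_poly (tau kB J1 J2 t))) (lam_max kB J1 J2 t))) (at t)"
  proof (rule implicit_root_deriv[where P = "\<lambda>s. char_poly (tau kB J1 J2 s)" and N = 4])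
    show "degree (char_poly (tau kB J1 J2 s)) \<le> 4" for s
      using degree_monic_char_poly[OF tau_carrier] by simp
    show "((\<lambda>s. coeff (char_poly (tau kB J1 J2 s)) k) has_real_derivative dcoef kB J1 J2 k t) (at t)" for k
      by (rule dcoef(1)[OF t])
    show "isCont (\<lambda>s. lam_max kB J1 J2 s) t" by (rule lam_cont[OF t])
    show "\<forall>\<^sub>F s in at t. poly (char_poly (tau kB J1 J2 s)) (lam_max kB J1 J2 s) = 0"
      by (rule always_eventually) (simp add: lam_root)
    show "poly (char_poly (tau kB J1 J2 t)) (lam_max kB J1 J2 t) = 0" by (rule lam_root)
    show "poly (pderiv (char_poly (tau kB J1 J2 t))) (lam_max kB J1 J2 t) \<noteq> 0"
      using Qd_pos[of kB J1 J2 t] unfolding Qd_def by simp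
  qed
  then show ?thesis unfolding Dl_def Qd_def .
qed

lemma lam_pos: "lam_max kB J1 J2 t > 0"
  using tau_perron[of kB J1 J2 t] by metis

lemma Dl_diff:
  assumes t: "t > 0"
  shows "Dl kB J1 J2 differentiable (at t)"
proof -
  have e: "Dl kB J1 J2 = (\<lambda>t. - (\<Sum>k\<le>4. dcoef kB J1 J2 k t * lam_max kB J1 J2 t ^ k) /
      (\<Sum>k\<le>4. of_nat (Suc k) * coeff (char_poly (tau kB J1 J2 t)) (Suc k) * lam_max kB J1 J2 t ^ k))"
    by (rule ext) (simp add: Dl_def Qd_sum)
  have ld: "(\<lambda>s. lam_max kB J1 J2 s) differentiable (at t)"
    using lam_DERIV[OF t] unfolding real_differentiable_def by blast
  have cd: "(\<lambda>s. coeff (char_poly (tau kB J1 J2 s)) k) differentiable (at t)" for k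
    by (rule sm_D[OF coeff_sm t])
  show ?thesis unfolding e
    using ld cd dcoef(2)[OF t] Qd_pos[of kB J1 J2 t] unfolding Qd_sum
    by (intro derivative_intros) auto
qed

lemma L_DERIV:
  assumes t: "t > 0"
  shows "((\<lambda>s. ln (lam_max kB J1 J2 s) / 4) has_real_derivative (Dl kB J1 J2 t / lam_max kB J1 J2 t / 4)) (at t)"
proof -
  have "((\<lambda>s. ln (lam_max kB J1 J2 s)) has_real_derivative (1 / lam_max kB J1 J2 t * Dl kB J1 J2 t)) (at t)"
    by (rule DERIV_chain2[OF DERIV_ln_divide[OF lam_pos] lam_DERIV[OF t]])
  from DERIV_cdivide[OF this, of 4] show ?thesis by simp
qed


lemma part1: "(\<lambda>M. ln (Zpart kB J1 J2 M T) / (4 * real M)) \<longlonglongrightarrow> ln (lam_max kB J1 J2 T) / 4"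
proof -
  have "(\<lambda>M. (ln (Zpart kB J1 J2 M T) / real M) / 4) \<longlonglongrightarrow> ln (lam_max kB J1 J2 T) / 4"
    by (intro tendsto_divide lim_Z tendsto_const) simp
  then show ?thesis by (simp add: field_simps)
qed

lemma fe_eq: "free_energy kB J1 J2 t = - kB * t * (ln (lam_max kB J1 J2 t) / 4)"
  unfolding free_energy_def using limI[OF part1[of kB J1 J2 t]] by simp

lemma mu_pos: "mu_max kB J1 J2 t > 0"
  using tau'_perron[of kB J1 J2 t] by metis

lemma part9: "(\<lambda>M. ln (Zpart' kB J1 J2 M T / Zpart kB J1 J2 M T) / real M)
           \<longlonglongrightarrow> ln (mu_max kB J1 J2 T / lam_max kB J1 J2 T)"
proof -
  have "(\<lambda>M. ln (Zpart' kB J1 J2 M T) / real M - ln (Zpart kB J1 J2 M T) / real M)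
      \<longlonglongrightarrow> ln (mu_max kB J1 J2 T) - ln (lam_max kB J1 J2 T)"
    by (intro tendsto_diff lim_Z lim_Z')
  moreover have "ln (Zpart' kB J1 J2 M T / Zpart kB J1 J2 M T) / real M
      = ln (Zpart' kB J1 J2 M T) / real M - ln (Zpart kB J1 J2 M T) / real M" for M
    using Zpart_pos[of kB J1 J2 M T] Zpart'_pos[of kB J1 J2 M T] by (simp add: ln_div diff_divide_distrib)
  moreover have "ln (mu_max kB J1 J2 T / lam_max kB J1 J2 T) = ln (mu_max kB J1 J2 T) - ln (lam_max kB J1 J2 T)"
    using mu_pos[of kB J1 J2 T] lam_pos[of kB J1 J2 T] by (simp add: ln_div)
  ultimately show ?thesis by simp
qed

theorem theorem7:
  fixes kB J1 J2 T :: real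
  assumes "kB > 0" and "T > 0"
  defines "L \<equiv> (\<lambda>t. ln (lam_max kB J1 J2 t) / 4)"
  shows "((\<lambda>M. ln (Zpart kB J1 J2 M T) / (4 * real M)) \<longlonglongrightarrow> L T)
    \<and> free_energy kB J1 J2 T = - (kB * T / 4) * ln (lam_max kB J1 J2 T)
    \<and> L differentiable (at T)
    \<and> (\<lambda>t. free_energy kB J1 J2 t / t) differentiable (at T)
    \<and> internal_energy kB J1 J2 T = kB * T\<^sup>2 * deriv L T
    \<and> deriv L differentiable (at T)
    \<and> internal_energy kB J1 J2 differentiable (at T)
    \<and> heat_capacity kB J1 J2 T = 2 * kB * T * deriv L T + kB * T\<^sup>2 * deriv (deriv L) T
    \<and> ((\<lambda>M. ln (Zpart' kB J1 J2 M T / Zpart kB J1 J2 M T) / real M)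
           \<longlonglongrightarrow> ln (mu_max kB J1 J2 T / lam_max kB J1 J2 T))"
proof -
  have T: "T > 0" by fact
  have opn: "open {0::real<..}" by simp
  define E where "E = (\<lambda>t. Dl kB J1 J2 t / lam_max kB J1 J2 t / 4)"
  have LD: "(L has_real_derivative E t) (at t)" if "t > 0" for t
    unfolding L_def E_def by (rule L_DERIV[OF that])
  have dL: "deriv L t = E t" if "t > 0" for t by (rule DERIV_imp_deriv[OF LD[OF that]])
  have Ediff: "E differentiable (at T)"
  proof -
    have "(\<lambda>s. lam_max kB J1 J2 s) differentiable (at T)"
      using lam_DERIV[OF T] unfolding real_differentiable_def by blast
    then show ?thesis unfolding E_def using Dl_diff[OF T] lam_pos[of kB J1 J2 T]
      by (intro derivative_intros) auto
  qed
  then obtain E' where E': "(E has_real_derivative E') (at T)"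
    unfolding real_differentiable_def by blast
  have dLD: "(deriv L has_real_derivative E') (at T)"
    by (rule has_field_derivative_transform_within_open[OF E' opn]) (use T dL in auto)
  have ddL: "deriv (deriv L) T = E'" by (rule DERIV_imp_deriv[OF dLD])
  have fe: "free_energy kB J1 J2 t = - kB * t * L t" for t
    unfolding L_def by (rule fe_eq)
  have feD: "((\<lambda>s. free_energy kB J1 J2 s / s) has_real_derivative (- kB * E t)) (at t)" if t: "t > 0" for t
  proof -
    have "((\<lambda>s. - kB * L s) has_real_derivative (- kB * E t)) (at t)"
      by (rule DERIV_cmult[OF LD[OF t]])
    then show ?thesis
      by (rule has_field_derivative_transform_within_open[OF _ opn]) (use t fe in auto)
  qed
  have ie: "internal_energy kB J1 J2 t = kB * t\<^sup>2 * E t" if t: "t > 0" for t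
    unfolding internal_energy_def using DERIV_imp_deriv[OF feD[OF t]] by simp
  have ieD0: "((\<lambda>t. kB * t\<^sup>2 * E t) has_real_derivative (kB * (2 * T) * E T + kB * T\<^sup>2 * E')) (at T)"
  proof -
    have a: "((\<lambda>t. kB * t\<^sup>2) has_real_derivative kB * (2 * T)) (at T)"
      by (auto intro!: derivative_eq_intros)
    show ?thesis using DERIV_mult[OF a E'] by (simp add: mult.commute)
  qed
  have ieD: "(internal_energy kB J1 J2 has_real_derivative (kB * (2 * T) * E T + kB * T\<^sup>2 * E')) (at T)"
    by (rule has_field_derivative_transform_within_open[OF ieD0 opn]) (use T ie in auto)
  have c1: "(\<lambda>M. ln (Zpart kB J1 J2 M T) / (4 * real M)) \<longlonglongrightarrow> L T"
    unfolding L_def by (rule part1)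
  have c2: "free_energy kB J1 J2 T = - (kB * T / 4) * ln (lam_max kB J1 J2 T)"
    unfolding fe_eq by simp
  have c3: "L differentiable (at T)" using LD[OF T] unfolding real_differentiable_def by blast
  have c4: "(\<lambda>t. free_energy kB J1 J2 t / t) differentiable (at T)"
    using feD[OF T] unfolding real_differentiable_def by blast
  have c5: "internal_energy kB J1 J2 T = kB * T\<^sup>2 * deriv L T" using ie[OF T] dL[OF T] by simp
  have c6: "deriv L differentiable (at T)" using dLD unfolding real_differentiable_def by blast
  have c7: "internal_energy kB J1 J2 differentiable (at T)" using ieD unfolding real_differentiable_def by blast
  have c8: "heat_capacity kB J1 J2 T = 2 * kB * T * deriv L T + kB * T\<^sup>2 * deriv (deriv L) T"
    unfolding heat_capacity_def DERIV_imp_deriv[OF ieD] ddL dL[OF T] by simp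
  show ?thesis using c1 c2 c3 c4 c5 c6 c7 c8 part9 by blast
qed


end
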